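(* Let $q$ be a prime power. The graph $H_q$ is a $d$-regular graph on $n$ vertices, where (i) $n=q^2(q^2-q+1)=q^4-q^3+q^2$ and $d=(q+1)(q^2-1)=q^3+q^2-q-1$; (ii) the family $\mathcal C$ consists of $q^3+1$ maximal cliques of $H_q$, each of order $q^2$, and every two distinct members of $\mathcal C$ share exactly one vertex; (iii) each vertex of $H_q$ lies in exactly $q+1$ cliques of $\mathcal C$; (iv) every copy of $K_4$ in $H_q$ has at least three of its vertices in some single clique of $\mathcal C$.
   Context: $\mathrm{PG}(2,q^2)$ is the projective plane over $\mathbb F_{q^2}$ (points: one-dimensional subspaces of $\mathbb F_{q^2}^3$; lines: two-dimensional subspaces). The Hermitian unital is $\mathcal H=\{\langle x,y,z\rangle : x^{q+1}+y^{q+1}+z^{q+1}=0\}$, a set of $q^3+1$ points such that every line meets $\mathcal H$ in $1$ or $q+1$ points; lines meeting it in $q+1$ points are called secants. $H_q$ is the graph whose vertex set is the set of secants of $\mathcal H$, two distinct secants being adjacent iff their intersection point lies in $\mathcal H$. For each point $P\in\mathcal H$ let $C_P$ be the set of secants through $P$, and let $\mathcal C=\{C_P: P\in\mathcal H\}$ (each $C_P$ is a clique of $H_q$). *)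

theory Defs
  imports "HOL-Computational_Algebra.Primes"
begin

text \<open>Vectors of F^3 are triples; points of PG(2,F) are one-dimensional subspaces,
lines are two-dimensional subspaces, both represented as sets of vectors.\<close>

type_synonym 'a vec3 = "'a \<times> 'a \<times> 'a"

definition zero3 :: "'a::field vec3" where
  "zero3 = (0, 0, 0)"

definition lincomb :: "'a::field \<Rightarrow> 'a vec3 \<Rightarrow> 'a \<Rightarrow> 'a vec3 \<Rightarrow> 'a vec3" where
  "lincomb a u b w = (case u of (u1, u2, u3) \<Rightarrow> case w of (w1, w2, w3) \<Rightarrow>
      (a * u1 + b * w1, a * u2 + b * w2, a * u3 + b * w3))"

definition lin_indep2 :: "'a::field vec3 \<Rightarrow> 'a vec3 \<Rightarrow> bool" where
  "lin_indep2 u w \<longleftrightarrow> (\<forall>a b. lincomb a u b w = zero3 \<longrightarrow> a = 0 \<and> b = 0)"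

definition span1 :: "'a::field vec3 \<Rightarrow> 'a vec3 set" where
  "span1 v = {lincomb c v 0 zero3 | c. True}"

definition span2 :: "'a::field vec3 \<Rightarrow> 'a vec3 \<Rightarrow> 'a vec3 set" where
  "span2 u w = {lincomb a u b w | a b. True}"

definition PG_points :: "'a::{field,finite} vec3 set set" where
  "PG_points = {span1 v | v. v \<noteq> zero3}"

definition PG_lines :: "'a::{field,finite} vec3 set set" where
  "PG_lines = {span2 u w | u w. lin_indep2 u w}"

definition herm :: "nat \<Rightarrow> 'a::field vec3 \<Rightarrow> 'a" where
  "herm q v = (case v of (x, y, z) \<Rightarrow> x ^ (q + 1) + y ^ (q + 1) + z ^ (q + 1))"

definition unital :: "nat \<Rightarrow> 'a::{field,finite} vec3 set set" where
  "unital q = {P \<in> PG_points. \<exists>v \<in> P. v \<noteq> zero3 \<and> herm q v = 0}"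

text \<open>Point P lies on line L iff P is a subspace of L.\<close>
definition secants :: "nat \<Rightarrow> 'a::{field,finite} vec3 set set" where
  "secants q = {L \<in> PG_lines. card {P \<in> unital q. P \<subseteq> L} = q + 1}"

definition Hadj :: "nat \<Rightarrow> 'a::{field,finite} vec3 set \<Rightarrow> 'a vec3 set \<Rightarrow> bool" where
  "Hadj q L M \<longleftrightarrow> L \<in> secants q \<and> M \<in> secants q \<and> L \<noteq> M \<and> L \<inter> M \<in> unital q"

definition clique_at :: "nat \<Rightarrow> 'a::{field,finite} vec3 set \<Rightarrow> 'a vec3 set set" where
  "clique_at q P = {L \<in> secants q. P \<subseteq> L}"

definition cliqueFamily :: "nat \<Rightarrow> 'a::{field,finite} vec3 set set set" where
  "cliqueFamily q = clique_at q ` unital q"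

definition is_clique :: "nat \<Rightarrow> 'a::{field,finite} vec3 set set \<Rightarrow> bool" where
  "is_clique q K \<longleftrightarrow> K \<subseteq> secants q \<and> (\<forall>L\<in>K. \<forall>M\<in>K. L \<noteq> M \<longrightarrow> Hadj q L M)"

definition is_maximal_clique :: "nat \<Rightarrow> 'a::{field,finite} vec3 set set \<Rightarrow> bool" where
  "is_maximal_clique q K \<longleftrightarrow> is_clique q K \<and>
     (\<forall>K'. is_clique q K' \<and> K \<subseteq> K' \<longrightarrow> K' = K)"

definition prime_power :: "nat \<Rightarrow> bool" where
  "prime_power q \<longleftrightarrow> (\<exists>p k. prime p \<and> k \<ge> 1 \<and> q = p ^ k)"

end

theory Submission
  imports Defs "HOL-Computational_Algebra.Polynomial"
begin


lemma card_fibers_sum: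
  assumes "finite A" "finite B" "f ` A \<subseteq> B"
  shows "card A = (\<Sum>b\<in>B. card {a\<in>A. f a = b})"
proof -
  have "A = (\<Union>b\<in>B. {a\<in>A. f a = b})" using assms(3) by auto
  hence "card A = card (\<Union>b\<in>B. {a\<in>A. f a = b})" by simp
  also have "\<dots> = (\<Sum>b\<in>B. card {a\<in>A. f a = b})"
    by (rule card_UN_disjoint) (use assms in auto)
  finally show ?thesis .
qed

lemma fiber_squeeze:
  assumes "finite A" "finite B" "f ` A \<subseteq> B"
    and le: "\<And>b. b \<in> B \<Longrightarrow> card {a\<in>A. f a = b} \<le> k"
    and cB: "card B \<le> m" and cA: "card A = m * k" and k: "k > 0"
  shows "card B = m \<and> (\<forall>b\<in>B. card {a\<in>A. f a = b} = k)"
proof -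
  have s: "card A = (\<Sum>b\<in>B. card {a\<in>A. f a = b})" by (rule card_fibers_sum) fact+
  have "(\<Sum>b\<in>B. card {a\<in>A. f a = b}) \<le> (\<Sum>b\<in>B. k)" by (rule sum_mono) (rule le)
  hence s2: "m * k \<le> card B * k" using s cA by simp
  hence "m \<le> card B" using k by simp
  hence cb: "card B = m" using cB by simp
  have "\<forall>b\<in>B. card {a\<in>A. f a = b} = k"
  proof (rule ccontr)
    assume "\<not> ?thesis"
    then obtain b where b: "b \<in> B" "card {a\<in>A. f a = b} \<noteq> k" by blast
    hence "card {a\<in>A. f a = b} < k" using le[OF b(1)] by simp
    hence "(\<Sum>b\<in>B. card {a\<in>A. f a = b}) < (\<Sum>b\<in>B. k)"
      by (intro sum_strict_mono_ex1) (use assms b le in auto)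
    thus False using s cA cb by simp
  qed
  thus ?thesis using cb by simp
qed

lemma card_roots_poly_le:
  fixes c :: "'a::field"
  assumes "n > 0"
  shows "card {x. x ^ n = c} \<le> n"
proof -
  let ?p = "monom 1 n + [:-c:]"
  have d: "degree ?p = n" using assms
    by (subst degree_add_eq_left) (auto simp: degree_monom_eq)
  hence "?p \<noteq> 0" using assms by auto
  from card_poly_roots_bound[OF this] d have "card {x. poly ?p x = 0} \<le> n" by simp
  moreover have "{x. poly ?p x = 0} = {x. x ^ n = c}" by (auto simp: poly_monom)
  ultimately show ?thesis by simp
qed

lemma card_roots_poly2_le:
  fixes c d :: "'a::field"
  assumes "n > 1"
  shows "card {x. x ^ n + d * x = c} \<le> n"
proof -
  let ?p = "monom 1 n + [:- c, d:]"
  have d: "degree ?p = n" using assms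
    by (subst degree_add_eq_left) (auto simp: degree_monom_eq)
  hence "?p \<noteq> 0" using assms by auto
  from card_poly_roots_bound[OF this] d have "card {x. poly ?p x = 0} \<le> n" by simp
  moreover have "{x. poly ?p x = 0} = {x. x ^ n + d * x = c}"
    by (auto simp: poly_monom algebra_simps)
  ultimately show ?thesis by simp
qed

locale U =
  fixes q :: nat and ty :: "'a::{field,finite} itself"
  assumes pp: "prime_power q"
    and cq: "card (UNIV :: 'a set) = q ^ 2"
begin

lemma q_ge2: "q \<ge> 2"
proof -
  obtain p k where "prime p" "k \<ge> 1" "q = p ^ k" using pp unfolding prime_power_def by blast
  moreover have "p \<ge> 2" using \<open>prime p\<close> prime_ge_2_nat by blast
  ultimately have "q \<ge> p" using self_le_power[of p k] by simp
  thus ?thesis using \<open>p \<ge> 2\<close> by simp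
qed

lemma char_card: "of_nat (card (UNIV :: 'a set)) = (0::'a)"
proof -
  have "(\<Sum>y\<in>(UNIV::'a set). y + 1) = (\<Sum>y\<in>UNIV. y)"
    by (rule sum.reindex_bij_witness[of _ "\<lambda>y. y - 1" "\<lambda>y. y + 1"]) auto
  thus ?thesis by (simp add: sum.distrib)
qed

lemma prime_char: "prime CHAR('a)"
  using prime_CHAR_semidom[where ?'a = 'a] finite_imp_CHAR_pos[where ?'a='a] by auto

lemma q_char_pow: "\<exists>k. q = CHAR('a) ^ k"
proof -
  obtain p k where pk: "prime p" "k \<ge> 1" "q = p ^ k" using pp unfolding prime_power_def by blast
  have "of_nat (q^2) = (0::'a)" using char_card cq by simp
  hence "CHAR('a) dvd q ^ 2" by (simp only: of_nat_eq_0_iff_char_dvd)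
  hence "CHAR('a) dvd p ^ (k * 2)" using pk by (simp add: power_mult)
  hence "CHAR('a) dvd p" using prime_char prime_dvd_power by blast
  hence "CHAR('a) = p" using prime_char pk(1) by (simp add: primes_dvd_imp_eq)
  thus ?thesis using pk by auto
qed

definition sg :: "'a \<Rightarrow> 'a" where "sg x = x ^ q"

lemma sg_add: "sg (x + y) = sg x + sg y"
  using q_char_pow freshmans_dream'[OF prime_char] unfolding sg_def by blast

lemma sg_mult: "sg (x * y) = sg x * sg y" unfolding sg_def by (simp add: power_mult_distrib)

lemma sg_zero[simp]: "sg 0 = 0" unfolding sg_def using q_ge2 by simp
lemma sg_one[simp]: "sg 1 = 1" unfolding sg_def by simp

lemma sg_minus: "sg (- x) = - sg x"
  using sg_add[of x "-x"] neg_eq_iff_add_eq_0[of "sg x" "sg (-x)"] by simp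

lemma sg_diff: "sg (x - y) = sg x - sg y"
  using sg_add[of x "-y"] sg_minus by simp

lemma pow_card: "(x::'a) ^ card (UNIV :: 'a set) = x"
proof (cases "x = 0")
  case False
  have "x * (\<Prod>y\<in>UNIV-{0}. x * y) = x * x ^ (card (UNIV :: 'a set) - 1) * \<Prod>(UNIV-{0})"
    by (simp add: prod.distrib mult_ac)
  also have "x * x ^ (card (UNIV :: 'a set) - 1) = x ^ Suc (card (UNIV :: 'a set) - 1)"
    by (subst power_Suc) auto
  also have "Suc (card (UNIV :: 'a set) - 1) = card (UNIV :: 'a set)"
    using finite_UNIV_card_ge_0[where ?'a = 'a] by simp
  also have "(\<Prod>y\<in>UNIV-{0}. x * y) = (\<Prod>y\<in>UNIV-{0}. y)"
    by (rule prod.reindex_bij_witness[of _ "\<lambda>y. y / x" "\<lambda>y. x * y"]) (use False in auto)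
  finally show ?thesis
    by simp
qed (use finite_UNIV_card_ge_0[where ?'a = 'a] in auto)

lemma sg_sg[simp]: "sg (sg x) = x"
  unfolding sg_def using pow_card[of x] cq by (simp add: power_mult[symmetric] power2_eq_square)

lemma sg_inj: "sg x = sg y \<longleftrightarrow> x = y" by (metis sg_sg)

lemma sg_eq0[simp]: "sg x = 0 \<longleftrightarrow> x = 0" using sg_inj[of x 0] by simp

lemma sg_inverse: "sg (inverse x) = inverse (sg x)" unfolding sg_def by (simp add: power_inverse)
lemma sg_divide: "sg (x / y) = sg x / sg y" unfolding sg_def by (simp add: power_divide)

definition nrm :: "'a \<Rightarrow> 'a" where "nrm x = x * sg x"

lemma nrm_pow: "x ^ (q + 1) = nrm x" unfolding nrm_def sg_def by (simp add: mult.commute)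

lemma sg_nrm: "sg (nrm x) = nrm x" unfolding nrm_def by (simp add: sg_mult mult.commute)
lemma nrm_mult: "nrm (x * y) = nrm x * nrm y" unfolding nrm_def by (simp add: sg_mult mult_ac)
lemma nrm_eq0[simp]: "nrm x = 0 \<longleftrightarrow> x = 0" unfolding nrm_def by simp
lemma nrm_minus[simp]: "nrm (- x) = nrm x" unfolding nrm_def by (simp add: sg_minus)
lemma nrm_sg: "nrm (sg x) = nrm x" unfolding nrm_def by (simp add: mult.commute)
lemma nrm_one[simp]: "nrm 1 = 1" unfolding nrm_def by simp
lemma nrm_zero[simp]: "nrm 0 = 0" unfolding nrm_def by simp
lemma nrm_divide: "nrm (x / y) = nrm x / nrm y" unfolding nrm_def by (simp add: sg_divide)

definition Fq :: "'a set" where "Fq = {x. sg x = x}"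

lemma card_Fq_le: "card Fq \<le> q"
proof -
  have "card {x::'a. x ^ q + (-1) * x = 0} \<le> q" using q_ge2 by (intro card_roots_poly2_le) auto
  moreover have "{x::'a. x ^ q + (-1) * x = 0} = Fq" by (auto simp: Fq_def sg_def)
  ultimately show ?thesis by simp
qed

lemma trace_counts: "card Fq = q \<and> (\<forall>c\<in>Fq. card {x. x + sg x = c} = q)"
proof -
  have "card Fq = q \<and> (\<forall>c\<in>Fq. card {x\<in>UNIV. x + sg x = c} = q)"
  proof (rule fiber_squeeze)
    show "(\<lambda>x. x + sg x) ` UNIV \<subseteq> Fq" by (auto simp: Fq_def sg_add add.commute)
    fix c :: 'a
    have "card {x::'a. x ^ q + 1 * x = c} \<le> q" using q_ge2 by (intro card_roots_poly2_le) auto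
    moreover have "{x::'a. x ^ q + 1 * x = c} = {x \<in> UNIV. x + sg x = c}" by (auto simp: sg_def add.commute)
    ultimately show "card {x \<in> UNIV. x + sg x = c} \<le> q" by simp
  qed (use card_Fq_le cq q_ge2 in \<open>auto simp: power2_eq_square\<close>)
  thus ?thesis by simp
qed

lemma card_Fq: "card Fq = q" using trace_counts by simp

lemma norm_counts: "\<forall>c\<in>Fq - {0}. card {x. nrm x = c} = q + 1"
proof -
  have "card (Fq - {0}) = q - 1 \<and> (\<forall>c\<in>Fq - {0}. card {x\<in>UNIV - {0}. nrm x = c} = q + 1)"
  proof (rule fiber_squeeze)
    show "nrm ` (UNIV - {0}) \<subseteq> Fq - {0}" by (auto simp: Fq_def sg_nrm)
    fix c :: 'a
    have "card {x::'a. x ^ (q+1) = c} \<le> q + 1" by (intro card_roots_poly_le) auto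
    moreover have "{x\<in>UNIV - {0}. nrm x = c} \<subseteq> {x::'a. x ^ (q+1) = c}" using nrm_pow by auto
    ultimately show "card {x\<in>UNIV - {0}. nrm x = c} \<le> q + 1"
      by (meson card_mono finite order_trans)
  next
    have "0 \<in> Fq" by (simp add: Fq_def)
    thus "card (Fq - {0}) \<le> q - 1" using card_Fq by simp
  next
    have "card (UNIV - {0::'a}) = q^2 - 1" using cq by (simp add: card_Diff_singleton)
    also have "\<dots> = (q - 1) * (q + 1)" by (simp add: power2_eq_square algebra_simps diff_mult_distrib)
    finally show "card (UNIV - {0::'a}) = (q - 1) * (q + 1)" .
  qed auto
  moreover have "\<And>c. c \<noteq> 0 \<Longrightarrow> {x\<in>UNIV - {0}. nrm x = c} = {x. nrm x = c}" by auto
  ultimately show ?thesis by auto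
qed

lemma nrm_count: "c \<in> Fq \<Longrightarrow> card {x. nrm x = c} = (if c = 0 then 1 else q + 1)"
  using norm_counts by auto

end


lemma card_pairs:
  fixes P :: "'b::finite \<Rightarrow> 'c::finite \<Rightarrow> bool"
  shows "card {(s,t). P s t} = (\<Sum>t\<in>UNIV. card {s. P s t})"
proof -
  have "{(s,t). P s t} = (\<Union>t\<in>UNIV. (\<lambda>s. (s,t)) ` {s. P s t})" by auto
  hence "card {(s,t). P s t} = card (\<Union>t\<in>UNIV. (\<lambda>s. (s,t)) ` {s. P s t})" by simp
  also have "\<dots> = (\<Sum>t\<in>UNIV. card ((\<lambda>s. (s,t)) ` {s. P s t}))"
    by (rule card_UN_disjoint) auto
  also have "\<dots> = (\<Sum>t\<in>UNIV. card {s. P s t})"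
    by (intro sum.cong refl card_image) (auto simp: inj_on_def)
  finally show ?thesis .
qed

context U begin

lemma sum_split0:
  "(\<Sum>t\<in>(UNIV::'a set). if t = 0 then a else b) = a + (q^2 - 1) * (b::nat)"
proof -
  have "(\<Sum>t\<in>(UNIV::'a set). if t = 0 then a else b)
     = (\<lambda>t. if t = 0 then a else b) (0::'a) + (\<Sum>t\<in>UNIV - {0::'a}. if t = 0 then a else b)"
    by (rule sum.remove) auto
  moreover have "(\<Sum>t\<in>UNIV - {0::'a}. if t = 0 then a else b) = (\<Sum>t\<in>UNIV - {0::'a}. b)"
    by (rule sum.cong) auto
  moreover have "(\<Sum>t\<in>UNIV - {0::'a}. b) = (q^2 - 1) * b" using cq by (simp add: card_Diff_singleton)
  ultimately show ?thesis by simp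
qed

lemma arith1: "1 + (q^2 - 1) * (q + 1) = q^3 + q^2 - q"
proof -
  obtain r where "q = r + 2" using q_ge2 by (metis add.commute le_Suc_ex)
  thus ?thesis by (simp add: power2_eq_square power3_eq_cube algebra_simps)
qed

lemma arith2: "q^2 + (q^2 - 1) * q = q^3 + q^2 - q"
proof -
  obtain r where "q = r + 2" using q_ge2 by (metis add.commute le_Suc_ex)
  thus ?thesis by (simp add: power2_eq_square power3_eq_cube algebra_simps)
qed

lemma Fq_sg: "c \<in> Fq \<Longrightarrow> sg c = c" by (simp add: Fq_def)

lemma card_translate: "card {s. nrm (s + d) = c} = card {x. nrm x = c}"
proof -
  have "{s. nrm (s + d) = c} = (\<lambda>x. x - d) ` {x. nrm x = c}"
    by (auto simp: image_iff) (metis add_diff_cancel)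
  thus ?thesis by (simp add: card_image inj_on_def)
qed

definition Qf :: "'a \<Rightarrow> 'a \<Rightarrow> 'a \<Rightarrow> 'a \<Rightarrow> 'a \<Rightarrow> 'a" where
  "Qf al ga be s t = al * nrm s + ga * nrm t + be * s * sg t + sg be * sg s * t"

lemma Qf_complete:
  assumes "al \<noteq> 0" "sg al = al"
  shows "Qf al ga be s t = al * (nrm (s + sg be * t / al) - nrm t * ((nrm be - al*ga)/al^2))"
  using assms unfolding Qf_def nrm_def
  by (simp add: sg_add sg_mult sg_divide field_simps power2_eq_square)

lemma BF1:
  assumes "al \<noteq> 0" "al \<in> Fq" "ga \<in> Fq"
  shows "card {(s,t). Qf al ga be s t = 0} =
           (if al * ga - nrm be = 0 then q^2 else q^3 + q^2 - q)"
proof -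
  define e where "e = (nrm be - al*ga)/al^2"
  have sal: "sg al = al" using assms Fq_sg by auto
  have eF: "sg e = e" unfolding e_def
    using assms by (simp add: Fq_sg sg_divide sg_diff sg_mult sg_nrm power2_eq_square)
  have fib: "card {s. Qf al ga be s t = 0} = (if nrm t * e = 0 then 1 else q + 1)" for t
  proof -
    have "{s. Qf al ga be s t = 0} = {s. nrm (s + sg be * t / al) = nrm t * e}"
      using Qf_complete[OF assms(1) sal] assms(1) by (auto simp: e_def)
    hence "card {s. Qf al ga be s t = 0} = card {x. nrm x = nrm t * e}"
      by (simp add: card_translate)
    also have "\<dots> = (if nrm t * e = 0 then 1 else q + 1)"
      by (rule nrm_count) (simp add: Fq_def sg_mult sg_nrm eF)
    finally show ?thesis .
  qed
  have "card {(s,t). Qf al ga be s t = 0} = (\<Sum>t\<in>UNIV. card {s. Qf al ga be s t = 0})"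
    by (rule card_pairs)
  also have "\<dots> = (\<Sum>t\<in>UNIV. if nrm t * e = 0 then 1 else q + 1)" by (simp add: fib)
  finally have *: "card {(s,t). Qf al ga be s t = 0} = (\<Sum>t\<in>UNIV. if nrm t * e = 0 then 1 else q + 1)" .
  show ?thesis
  proof (cases "al * ga - nrm be = 0")
    case True
    hence "e = 0" unfolding e_def by (simp add: right_minus_eq)
    thus ?thesis using * True cq by simp
  next
    case False
    hence "e \<noteq> 0" unfolding e_def using assms(1) by (simp add: right_minus_eq)
    hence "(\<Sum>t\<in>UNIV. if nrm t * e = 0 then 1 else q + 1) = (\<Sum>t\<in>(UNIV::'a set). if t = 0 then 1 else q + 1)"
      by (intro sum.cong) auto
    also have "\<dots> = 1 + (q^2 - 1) * (q + 1)" by (rule sum_split0)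
    also have "\<dots> = q^3 + q^2 - q" by (rule arith1)
    finally show ?thesis using * False by simp
  qed
qed

lemma BF:
  assumes "al \<in> Fq" "ga \<in> Fq" "\<not> (al = 0 \<and> ga = 0 \<and> be = 0)"
  shows "card {(s,t). Qf al ga be s t = 0} =
           (if al * ga - nrm be = 0 then q^2 else q^3 + q^2 - q)"
proof (cases "al \<noteq> 0")
  case True then show ?thesis using BF1 assms by blast
next
  case F1: False
  show ?thesis
  proof (cases "ga \<noteq> 0")
    case True
    have eq: "{(s,t). Qf al ga be s t = 0} = (\<lambda>(t,s). (s,t)) ` {(t,s). Qf ga al (sg be) t s = 0}"
      using F1 by (auto simp: Qf_def image_iff mult_ac add_ac)
    have "card {(s,t). Qf al ga be s t = 0} = card {(t,s). Qf ga al (sg be) t s = 0}"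
      unfolding eq by (rule card_image) (auto simp: inj_on_def)
    also have "\<dots> = (if ga * al - nrm (sg be) = 0 then q^2 else q^3 + q^2 - q)"
      using BF1[OF True assms(2,1)] by simp
    finally show ?thesis by (simp add: nrm_sg mult.commute)
  next
    case False
    hence z: "al = 0" "ga = 0" "be \<noteq> 0" using F1 assms by auto
    have fib: "card {s. Qf al ga be s t = 0} = (if t = 0 then q^2 else q)" for t
    proof (cases "t = 0")
      case True thus ?thesis using z cq by (simp add: Qf_def)
    next
      case False
      define b where "b = be * sg t"
      have b0: "b \<noteq> 0" using z False by (simp add: b_def)
      have "{s. Qf al ga be s t = 0} = (\<lambda>x. x / b) ` {x. x + sg x = 0}"
      proof -
        have "Qf al ga be s t = b * s + sg (b * s)" for s
          using z by (simp add: Qf_def b_def sg_mult mult_ac)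
        thus ?thesis using b0 by (auto simp: image_iff) (metis nonzero_mult_div_cancel_left)
      qed
      hence "card {s. Qf al ga be s t = 0} = card {x. x + sg x = 0}"
        using b0 by (simp add: card_image inj_on_def)
      also have "\<dots> = q" using trace_counts by (simp add: Fq_def)
      finally show ?thesis using False by simp
    qed
    have "card {(s,t). Qf al ga be s t = 0} = (\<Sum>t\<in>UNIV. card {s. Qf al ga be s t = 0})"
      by (rule card_pairs)
    also have "\<dots> = (\<Sum>t\<in>(UNIV::'a set). if t = 0 then q^2 else q)" by (simp add: fib)
    also have "\<dots> = q^2 + (q^2 - 1) * q" by (rule sum_split0)
    also have "\<dots> = q^3 + q^2 - q" by (rule arith2)
    finally show ?thesis using z by simp
  qed
qed

end


fun sm :: "'a::field \<Rightarrow> 'a vec3 \<Rightarrow> 'a vec3" where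
  "sm c (x,y,z) = (c*x, c*y, c*z)"
fun dot :: "'a::field vec3 \<Rightarrow> 'a vec3 \<Rightarrow> 'a" where
  "dot (a,b,c) (x,y,z) = a*x + b*y + c*z"
fun cross :: "'a::field vec3 \<Rightarrow> 'a vec3 \<Rightarrow> 'a vec3" where
  "cross (a,b,c) (x,y,z) = (b*z - c*y, c*x - a*z, a*y - b*x)"
fun rot :: "'a vec3 \<Rightarrow> 'a vec3" where
  "rot (x,y,z) = (y,z,x)"
fun third :: "'a vec3 \<Rightarrow> 'a" where
  "third (x,y,z) = z"

definition lineN :: "'a::field vec3 \<Rightarrow> 'a vec3 set" where
  "lineN n = {v. dot n v = 0}"

lemma zero3_eq: "zero3 = (0,0,0)" by (simp add: zero3_def)

lemma rot3[simp]: "rot (rot (rot v)) = v" by (cases v) auto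
lemma dot_rot[simp]: "dot (rot n) (rot v) = dot n v" by (cases n; cases v) (auto simp: algebra_simps)
lemma rot_zero[simp]: "rot v = zero3 \<longleftrightarrow> v = zero3" by (cases v) (auto simp: zero3_eq)
lemma rot_inj: "rot v = rot w \<longleftrightarrow> v = w" by (metis rot3)

lemma card_rot_pred:
  assumes "\<And>v. R (rot v) = R' v"
  shows "card {v. R v} = card {v::'a vec3. R' v}"
proof -
  have "{v. R v} = rot ` {v. R' v}" using assms by (auto simp: image_iff)
  thus ?thesis by (simp add: card_image inj_on_def rot_inj)
qed

lemma wlog_third:
  assumes "\<And>n. P (rot n) \<Longrightarrow> P n" "\<And>n. n \<noteq> zero3 \<Longrightarrow> third n \<noteq> 0 \<Longrightarrow> P n" "n \<noteq> zero3"
  shows "P n"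
proof -
  obtain a b c where n: "n = (a,b,c)" by (cases n)
  show ?thesis
  proof (cases "c \<noteq> 0")
    case True thus ?thesis using assms n by auto
  next
    case False
    show ?thesis
    proof (cases "a \<noteq> 0")
      case True
      hence "P (rot n)" using assms(2)[of "rot n"] n by (auto simp: zero3_eq)
      thus ?thesis using assms(1) by blast
    next
      case False
      hence "b \<noteq> 0" using \<open>\<not> c \<noteq> 0\<close> assms(3) n by (auto simp: zero3_eq)
      hence "P (rot (rot n))" using assms(2)[of "rot (rot n)"] n by (auto simp: zero3_eq)
      thus ?thesis using assms(1) by blast
    qed
  qed
qed

context U begin

lemma herm_eq: "herm q (x::'a,y,z) = nrm x + nrm y + nrm z"
  by (simp add: herm_def nrm_def sg_def)

lemma herm_rot[simp]: "herm q (rot (v::'a vec3)) = herm q v"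
  by (cases v) (simp add: herm_eq add_ac)

lemma herm_zero[simp]: "herm q (zero3::'a vec3) = 0" by (simp add: zero3_eq herm_eq)

lemma W_count3:
  fixes n :: "'a vec3"
  assumes "third n \<noteq> 0"
  shows "card {v. dot n v = 0 \<and> herm q v = 0} = (if herm q n = 0 then q^2 else q^3 + q^2 - q)
         \<and> card {v. dot n v = 0} = q^4"
proof -
  obtain n1 n2 n3 where n: "n = (n1,n2,n3)" by (cases n)
  have n3: "n3 \<noteq> 0" using assms n by simp
  define m1 where "m1 = - n1 / n3"
  define m2 where "m2 = - n2 / n3"
  define g where "g = (\<lambda>p::'a\<times>'a. (fst p, snd p, m1 * fst p + m2 * snd p))"
  have ginj: "inj g" by (auto simp: g_def inj_on_def)
  have dotg: "dot n v = 0 \<longleftrightarrow> v \<in> range g" for v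
  proof -
    obtain a b c where v: "v = (a,b,c)" by (cases v)
    have "dot n v = n3 * (c - (m1 * a + m2 * b))"
      using n3 by (simp add: v n m1_def m2_def field_simps)
    hence "dot n v = 0 \<longleftrightarrow> c = m1 * a + m2 * b" using n3 by simp
    thus ?thesis by (auto simp: g_def v image_iff)
  qed
  define al where "al = 1 + nrm m1"
  define ga where "ga = 1 + nrm m2"
  define be where "be = m1 * sg m2"
  have hg: "herm q (g (s,t)) = Qf al ga be s t" for s t
    by (simp add: g_def herm_eq Qf_def al_def ga_def be_def nrm_def sg_add sg_mult algebra_simps)
  have S: "{v. dot n v = 0 \<and> herm q v = 0} = g ` {(s,t). Qf al ga be s t = 0}"
  proof -
    have "{v. dot n v = 0 \<and> herm q v = 0} = {v \<in> range g. herm q v = 0}" using dotg by auto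
    also have "\<dots> = g ` {(s,t). Qf al ga be s t = 0}" using hg by auto
    finally show ?thesis .
  qed
  have alF: "al \<in> Fq" "ga \<in> Fq" by (auto simp: al_def ga_def Fq_def sg_add sg_nrm)
  have nz: "\<not> (al = 0 \<and> ga = 0 \<and> be = 0)"
    by (auto simp: al_def ga_def be_def)
  have det: "al * ga - nrm be = 0 \<longleftrightarrow> herm q n = 0"
  proof -
    have "al * ga - nrm be = 1 + nrm m1 + nrm m2"
      by (simp add: al_def ga_def be_def nrm_mult nrm_sg algebra_simps)
    also have "\<dots> = herm q n / nrm n3"
      using n3 by (simp add: m1_def m2_def nrm_divide herm_eq n field_simps)
    finally show ?thesis using n3 by simp
  qed
  have "card {v. dot n v = 0 \<and> herm q v = 0} = card {(s,t). Qf al ga be s t = 0}"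
    unfolding S by (rule card_image) (use ginj in \<open>auto simp: inj_on_def\<close>)
  also have "\<dots> = (if herm q n = 0 then q^2 else q^3 + q^2 - q)"
    using BF[OF alF nz] det by simp
  finally have 1: "card {v. dot n v = 0 \<and> herm q v = 0} = (if herm q n = 0 then q^2 else q^3 + q^2 - q)" .
  have "{v. dot n v = 0} = range g" using dotg by auto
  hence "card {v. dot n v = 0} = card (UNIV :: ('a \<times> 'a) set)"
    using ginj by (simp add: card_image)
  also have "\<dots> = q^4" using cq
    by (simp add: UNIV_Times_UNIV[symmetric] card_cartesian_product del: UNIV_Times_UNIV)
  finally show ?thesis using 1 by simp
qed

lemma W_count:
  fixes n :: "'a vec3"
  assumes "n \<noteq> zero3"
  shows "card {v. dot n v = 0 \<and> herm q v = 0} = (if herm q n = 0 then q^2 else q^3 + q^2 - q)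
         \<and> card {v. dot n v = 0} = q^4"
proof (rule wlog_third[OF _ _ assms])
  fix n :: "'a vec3"
  assume 1: "card {v. dot (rot n) v = 0 \<and> herm q v = 0} = (if herm q (rot n) = 0 then q^2 else q^3 + q^2 - q)
         \<and> card {v. dot (rot n) v = 0} = q^4"
  have "card {v. dot (rot n) v = 0 \<and> herm q v = 0} = card {v. dot n v = 0 \<and> herm q v = 0}"
    by (rule card_rot_pred) simp
  moreover have "card {v. dot (rot n) v = 0} = card {v. dot n v = 0}"
    by (rule card_rot_pred) simp
  ultimately show "card {v. dot n v = 0 \<and> herm q v = 0} = (if herm q n = 0 then q^2 else q^3 + q^2 - q)
         \<and> card {v. dot n v = 0} = q^4" using 1 by simp
next
  fix n :: "'a vec3"
  assume "third n \<noteq> 0"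
  thus "card {v. dot n v = 0 \<and> herm q v = 0} = (if herm q n = 0 then q^2 else q^3 + q^2 - q)
         \<and> card {v. dot n v = 0} = q^4" using W_count3 by blast
qed

end


lemma lincomb_sm: "lincomb c v 0 zero3 = sm c v"
  by (cases v) (simp add: lincomb_def zero3_eq)

lemma span1_eq: "span1 v = range (\<lambda>c. sm c v)"
  by (auto simp: span1_def lincomb_sm)

lemma sm_zero_iff: "sm c v = zero3 \<longleftrightarrow> c = 0 \<or> v = zero3"
  by (cases v) (auto simp: zero3_eq)

lemma sm_one[simp]: "sm 1 v = v" by (cases v) auto
lemma sm_sm[simp]: "sm a (sm b v) = sm (a*b) v" by (cases v) (auto simp: mult_ac)
lemma dot_sm: "dot n (sm c v) = c * dot n v" by (cases n; cases v) (auto simp: algebra_simps)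
lemma dot_sm1: "dot (sm c n) v = c * dot n v" by (cases n; cases v) (auto simp: algebra_simps)
lemma dot_comm: "dot n v = dot v n" by (cases n; cases v) (auto simp: algebra_simps)
lemma cross_anti: "cross v w = zero3 \<longleftrightarrow> cross w v = zero3"
  by (cases v; cases w) (auto simp: zero3_eq algebra_simps)
lemma cross_self[simp]: "cross v v = zero3" by (cases v) (auto simp: zero3_eq algebra_simps)
lemma cross_sm: "cross v (sm c v) = zero3" by (cases v) (auto simp: zero3_eq algebra_simps)
lemma dot_cross1[simp]: "dot n (cross n m) = 0" by (cases n; cases m) (auto simp: algebra_simps)
lemma dot_cross2[simp]: "dot m (cross n m) = 0" by (cases n; cases m) (auto simp: algebra_simps)
lemma sm_in_span1: "sm c v \<in> span1 v" by (auto simp: span1_eq)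
lemma in_span1: "v \<in> span1 v" using sm_in_span1[of 1 v] by simp

lemma cross_zeroD:
  fixes v w :: "'a::field vec3"
  assumes "v \<noteq> zero3" "cross v w = zero3"
  shows "\<exists>c. w = sm c v"
proof -
  obtain a b c where v: "v = (a,b,c)" by (cases v)
  obtain x y z where w: "w = (x,y,z)" by (cases w)
  have e: "b*z = c*y" "c*x = a*z" "a*y = b*x" using assms(2) by (auto simp: v w zero3_eq)
  show ?thesis
  proof (cases "a \<noteq> 0")
    case True
    hence "w = sm (x/a) v" using e by (auto simp: v w field_simps)
    thus ?thesis by blast
  next
    case a0: False
    show ?thesis
    proof (cases "b \<noteq> 0")
      case True
      hence "w = sm (y/b) v" using e a0 by (auto simp: v w field_simps)
      thus ?thesis by blast
    next
      case False
      hence "c \<noteq> 0" using a0 assms(1) v by (auto simp: zero3_eq)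
      hence "w = sm (z/c) v" using e a0 False by (auto simp: v w field_simps)
      thus ?thesis by blast
    qed
  qed
qed

lemma cross_zero_iff:
  fixes v w :: "'a::field vec3"
  assumes "v \<noteq> zero3"
  shows "cross v w = zero3 \<longleftrightarrow> (\<exists>c. w = sm c v)"
  using cross_zeroD[OF assms] cross_sm by blast

lemma span1_eq_iff:
  fixes v w :: "'a::field vec3"
  assumes "v \<noteq> zero3" "w \<noteq> zero3"
  shows "span1 v = span1 w \<longleftrightarrow> cross v w = zero3"
proof
  assume "span1 v = span1 w"
  hence "w \<in> span1 v" using in_span1 by blast
  then obtain c where "w = sm c v" by (auto simp: span1_eq)
  thus "cross v w = zero3" using cross_sm by simp
next
  assume "cross v w = zero3"
  then obtain c where c: "w = sm c v" using cross_zeroD assms by blast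
  hence c0: "c \<noteq> 0" using assms by (auto simp: sm_zero_iff)
  have "v = sm (1/c) w" using c c0 by simp
  show "span1 v = span1 w"
  proof
    show "span1 w \<subseteq> span1 v" using c by (auto simp: span1_eq)
    show "span1 v \<subseteq> span1 w" using \<open>v = sm (1/c) w\<close> by (auto simp: span1_eq)
  qed
qed

lemma span1_sub_eq:
  fixes v w :: "'a::field vec3"
  assumes "v \<noteq> zero3" "w \<noteq> zero3" "span1 w \<subseteq> span1 v"
  shows "span1 w = span1 v"
proof -
  have "w \<in> span1 v" using in_span1 assms(3) by blast
  then obtain c where "w = sm c v" by (auto simp: span1_eq)
  hence "cross v w = zero3" using cross_sm by simp
  thus ?thesis using span1_eq_iff assms by metis
qed

lemma span1_sub_lineN: "span1 v \<subseteq> lineN n \<longleftrightarrow> dot n v = 0"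
  using in_span1[of v] by (auto simp: span1_eq lineN_def dot_sm)

lemma cross_cross_zero:
  fixes x n m :: "'a::field vec3"
  assumes "dot x n = 0" "dot x m = 0"
  shows "cross x (cross n m) = zero3"
proof -
  obtain a b c where x: "x = (a,b,c)" by (cases x)
  obtain n1 n2 n3 where n: "n = (n1,n2,n3)" by (cases n)
  obtain m1 m2 m3 where m: "m = (m1,m2,m3)" by (cases m)
  have "cross x (cross n m) = (n1 * dot x m - m1 * dot x n, n2 * dot x m - m2 * dot x n, n3 * dot x m - m3 * dot x n)"
    by (simp add: x n m algebra_simps)
  thus ?thesis using assms by (simp add: zero3_eq)
qed

lemma lineN_sub:
  fixes n m :: "'a::field vec3"
  assumes "lineN n \<subseteq> lineN m"
  shows "cross n m = zero3"
proof -
  obtain a b c where n: "n = (a,b,c)" by (cases n)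
  have de: "\<And>e. dot m (cross n e) = 0"
  proof -
    fix e
    have "cross n e \<in> lineN n" by (simp add: lineN_def)
    hence "cross n e \<in> lineN m" using assms by blast
    thus "dot m (cross n e) = 0" by (simp add: lineN_def)
  qed
  obtain x y z where m: "m = (x,y,z)" by (cases m)
  from de[of "(1,0,0)"] have e1: "c*y = b*z" by (simp add: n m mult.commute)
  from de[of "(0,1,0)"] have e2: "a*z = c*x" by (simp add: n m mult.commute)
  from de[of "(0,0,1)"] have e3: "b*x = a*y" by (simp add: n m mult.commute)
  show ?thesis using e1 e2 e3 by (simp add: n m zero3_eq mult.commute)
qed

lemma lineN_eq_iff:
  fixes n m :: "'a::field vec3"
  assumes "n \<noteq> zero3" "m \<noteq> zero3"
  shows "lineN n = lineN m \<longleftrightarrow> cross n m = zero3"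
proof
  assume "lineN n = lineN m" thus "cross n m = zero3" using lineN_sub by blast
next
  assume "cross n m = zero3"
  then obtain c where c: "m = sm c n" using cross_zeroD assms by blast
  hence "c \<noteq> 0" using assms by (auto simp: sm_zero_iff)
  thus "lineN n = lineN m" using c by (auto simp: lineN_def dot_sm1)
qed

lemma lineN_span1_iff:
  fixes n m :: "'a::field vec3"
  assumes "n \<noteq> zero3" "m \<noteq> zero3"
  shows "lineN n = lineN m \<longleftrightarrow> span1 n = span1 m"
  using lineN_eq_iff span1_eq_iff assms by metis

lemma lineN_inter:
  fixes n m :: "'a::field vec3"
  assumes "cross n m \<noteq> zero3"
  shows "lineN n \<inter> lineN m = span1 (cross n m)"
proof
  show "span1 (cross n m) \<subseteq> lineN n \<inter> lineN m"
    by (auto simp: span1_eq lineN_def dot_sm)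
  show "lineN n \<inter> lineN m \<subseteq> span1 (cross n m)"
  proof
    fix v assume "v \<in> lineN n \<inter> lineN m"
    hence "dot v n = 0" "dot v m = 0" by (auto simp: lineN_def dot_comm)
    hence "cross v (cross n m) = zero3" by (rule cross_cross_zero)
    hence "cross (cross n m) v = zero3" using cross_anti by blast
    then obtain c where "v = sm c (cross n m)" using cross_zeroD assms by blast
    thus "v \<in> span1 (cross n m)" by (simp add: sm_in_span1)
  qed
qed

lemma lincomb_eq: "lincomb a (u1,u2,u3) b (w1,w2,w3) = (a*u1+b*w1, a*u2+b*w2, a*u3+b*w3)"
  by (simp add: lincomb_def)

lemma lin_indep2_iff:
  fixes u w :: "'a::field vec3"
  shows "lin_indep2 u w \<longleftrightarrow> cross u w \<noteq> zero3"
proof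
  assume li: "lin_indep2 u w"
  show "cross u w \<noteq> zero3"
  proof
    assume cz: "cross u w = zero3"
    show False
    proof (cases "u = zero3")
      case True
      hence "lincomb 1 u 0 w = zero3" by (cases w) (simp add: zero3_eq lincomb_eq)
      thus False using li[unfolded lin_indep2_def, rule_format, of 1 0] by simp
    next
      case False
      then obtain c where "w = sm c u" using cross_zeroD cz by blast
      hence "lincomb c u (-1) w = zero3" by (cases u) (simp add: zero3_eq lincomb_eq)
      thus False using li[unfolded lin_indep2_def, rule_format, of c "-1"] by simp
    qed
  qed
next
  assume cz: "cross u w \<noteq> zero3"
  show "lin_indep2 u w" unfolding lin_indep2_def
  proof (intro allI impI)
    fix a b assume e: "lincomb a u b w = zero3"
    obtain u1 u2 u3 where u: "u = (u1,u2,u3)" by (cases u)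
    obtain w1 w2 w3 where w: "w = (w1,w2,w3)" by (cases w)
    have e': "a*u1 + b*w1 = 0" "a*u2+b*w2 = 0" "a*u3+b*w3 = 0"
      using e by (auto simp: u w lincomb_eq zero3_eq)
    have a0: "a = 0"
    proof (rule ccontr)
      assume "a \<noteq> 0"
      hence "u = sm (-b/a) w" using e' by (auto simp: u w field_simps eq_neg_iff_add_eq_0)
      hence "cross u w = zero3" using cross_sm cross_anti by metis
      thus False using cz by simp
    qed
    have b0: "b = 0"
    proof (rule ccontr)
      assume "b \<noteq> 0"
      hence "w = zero3" using e' a0 by (simp add: w zero3_eq)
      hence "cross u w = zero3" by (cases u) (simp add: w zero3_eq)
      thus False using cz by simp
    qed
    show "a = 0 \<and> b = 0" using a0 b0 by simp
  qed
qed


lemma divk: "(k::'a::field) \<noteq> 0 \<Longrightarrow> k*v = A*u + B*w \<Longrightarrow> v = (A/k)*u + (B/k)*w"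
  by (simp add: field_simps)

lemma cramer3:
  fixes u1 u2 u3 w1 w2 w3 v1 v2 v3 k :: "'a::field"
  assumes "k = u1*w2 - u2*w1" "k \<noteq> 0" "(u2*w3-u3*w2)*v1 + (u3*w1-u1*w3)*v2 + k*v3 = 0"
  shows "v1 = ((v1*w2-v2*w1)/k)*u1 + ((u1*v2-u2*v1)/k)*w1
       \<and> v2 = ((v1*w2-v2*w1)/k)*u2 + ((u1*v2-u2*v1)/k)*w2
       \<and> v3 = ((v1*w2-v2*w1)/k)*u3 + ((u1*v2-u2*v1)/k)*w3"
proof -
  have "k*v3 = -((u2*w3-u3*w2)*v1 + (u3*w1-u1*w3)*v2)" by (metis assms(3) add.commute neg_eq_iff_add_eq_0)
  hence 3: "k*v3 = (v1*w2-v2*w1)*u3 + (u1*v2-u2*v1)*w3" by (simp add: algebra_simps)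
  have 1: "k*v1 = (v1*w2-v2*w1)*u1 + (u1*v2-u2*v1)*w1" unfolding assms(1) by (simp add: algebra_simps)
  have 2: "k*v2 = (v1*w2-v2*w1)*u2 + (u1*v2-u2*v1)*w2" unfolding assms(1) by (simp add: algebra_simps)
  show ?thesis using divk[OF assms(2) 1] divk[OF assms(2) 2] divk[OF assms(2) 3] by blast
qed

lemma span2_lineN:
  fixes u w :: "'a::field vec3"
  assumes "cross u w \<noteq> zero3"
  shows "span2 u w = lineN (cross u w)"
proof
  obtain u1 u2 u3 where u: "u = (u1,u2,u3)" by (cases u)
  obtain w1 w2 w3 where w: "w = (w1,w2,w3)" by (cases w)
  show "span2 u w \<subseteq> lineN (cross u w)"
  proof
    fix v assume "v \<in> span2 u w"
    then obtain a b where "v = lincomb a u b w" by (auto simp: span2_def)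
    thus "v \<in> lineN (cross u w)" by (simp add: lineN_def u w lincomb_eq algebra_simps)
  qed
  show "lineN (cross u w) \<subseteq> span2 u w"
  proof
    fix v assume "v \<in> lineN (cross u w)"
    obtain v1 v2 v3 where v: "v = (v1,v2,v3)" by (cases v)
    have dv: "(u2*w3-u3*w2)*v1 + (u3*w1-u1*w3)*v2 + (u1*w2-u2*w1)*v3 = 0"
      using \<open>v \<in> lineN (cross u w)\<close> by (simp add: lineN_def u w v)
    have c: "u1*w2-u2*w1 \<noteq> 0 \<or> u2*w3-u3*w2 \<noteq> 0 \<or> u3*w1-u1*w3 \<noteq> 0"
      using assms by (auto simp: u w zero3_eq)
    have "\<exists>a b. v = lincomb a u b w"
    proof -
      { assume k: "u1*w2-u2*w1 \<noteq> 0"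
        from cramer3[OF refl k dv] have ?thesis by (simp only: u w v lincomb_eq prod.inject) blast }
      moreover
      { assume k: "u2*w3-u3*w2 \<noteq> 0"
        have dv': "(u3*w1-u1*w3)*v2 + (u1*w2-u2*w1)*v3 + (u2*w3-u3*w2)*v1 = 0" using dv by (simp add: algebra_simps)
        from cramer3[OF refl k dv'] have ?thesis by (simp only: u w v lincomb_eq prod.inject) blast }
      moreover
      { assume k: "u3*w1-u1*w3 \<noteq> 0"
        have dv': "(u1*w2-u2*w1)*v3 + (u2*w3-u3*w2)*v1 + (u3*w1-u1*w3)*v2 = 0" using dv by (simp add: algebra_simps)
        from cramer3[OF refl k dv'] have ?thesis by (simp only: u w v lincomb_eq prod.inject) blast }
      ultimately show ?thesis using c by blast
    qed
    thus "v \<in> span2 u w" by (auto simp: span2_def)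
  qed
qed

lemma lineN_cross_sm:
  fixes n :: "'a::field vec3"
  assumes "n \<noteq> zero3" "k \<noteq> 0" "cross u w = sm k n"
  shows "cross u w \<noteq> zero3" "lineN (cross u w) = lineN n"
proof -
  show nz: "cross u w \<noteq> zero3" using assms by (simp add: sm_zero_iff)
  have "cross n (cross u w) = zero3" using assms(3) cross_sm by simp
  thus "lineN (cross u w) = lineN n" using lineN_eq_iff[OF assms(1) nz] by simp
qed

lemma PG_lines_eq: "(PG_lines :: 'a::{field,finite} vec3 set set) = lineN ` {n. n \<noteq> zero3}"
proof
  show "PG_lines \<subseteq> lineN ` {n. n \<noteq> zero3}"
    by (auto simp: PG_lines_def lin_indep2_iff span2_lineN)
  show "lineN ` {n. n \<noteq> zero3} \<subseteq> (PG_lines :: 'a vec3 set set)"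
  proof
    fix L assume "L \<in> lineN ` {n::'a vec3. n \<noteq> zero3}"
    then obtain n :: "'a vec3" where n: "n \<noteq> zero3" "L = lineN n" by auto
    obtain n1 n2 n3 where nn: "n = (n1,n2,n3)" by (cases n)
    have "\<exists>u w. cross u w \<noteq> zero3 \<and> lineN (cross u w) = lineN n"
    proof -
      { assume k: "n3 \<noteq> 0"
        have "cross (n3,0,-n1) (0,n3,-n2) = sm n3 n" by (simp add: nn algebra_simps)
        hence ?thesis using lineN_cross_sm[OF n(1) k] by blast }
      moreover
      { assume k: "n1 \<noteq> 0"
        have "cross (-n2,n1,0) (-n3,0,n1) = sm n1 n" by (simp add: nn algebra_simps)
        hence ?thesis using lineN_cross_sm[OF n(1) k] by blast }
      moreover
      { assume k: "n2 \<noteq> 0"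
        have "-n2 \<noteq> 0" using k by simp
        moreover have "cross (n2,-n1,0) (0,-n3,n2) = sm (-n2) n" by (simp add: nn algebra_simps)
        ultimately have ?thesis using lineN_cross_sm[OF n(1)] by blast }
      ultimately show ?thesis using n(1) nn by (auto simp: zero3_eq)
    qed
    then obtain u w where uw: "cross u w \<noteq> zero3" "lineN (cross u w) = lineN n" by blast
    hence "L = span2 u w" using n(2) span2_lineN by metis
    moreover have "lin_indep2 u w" using uw lin_indep2_iff by blast
    ultimately show "L \<in> PG_lines" unfolding PG_lines_def by blast
  qed
qed

lemma PG_points_eq: "PG_points = span1 ` {v. v \<noteq> zero3}"
  by (auto simp: PG_points_def)

lemma card_image_rel:
  assumes "finite S" "\<And>x y. x \<in> S \<Longrightarrow> y \<in> S \<Longrightarrow> f x = f y \<longleftrightarrow> g x = g y"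
  shows "card (f ` S) = card (g ` S)"
proof -
  define h where "h = (\<lambda>P. g (SOME x. x \<in> S \<and> f x = P))"
  have hf: "h (f x) = g x" if "x \<in> S" for x
  proof -
    have "\<exists>y. y \<in> S \<and> f y = f x" using that by blast
    hence "(SOME y. y \<in> S \<and> f y = f x) \<in> S \<and> f (SOME y. y \<in> S \<and> f y = f x) = f x" by (rule someI_ex)
    thus ?thesis unfolding h_def using assms(2) that by blast
  qed
  have "g ` S = h ` (f ` S)"
  proof
    show "g ` S \<subseteq> h ` (f ` S)" using hf by (auto simp: image_iff)
    show "h ` (f ` S) \<subseteq> g ` S" using hf by auto
  qed
  moreover have "inj_on h (f ` S)"
    by (auto simp: inj_on_def hf assms(2))
  ultimately show ?thesis by (simp add: card_image)
qed

context U begin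

lemma herm_sm: "herm q (sm c (v::'a vec3)) = nrm c * herm q v"
  by (cases v) (simp add: herm_eq nrm_mult algebra_simps)

lemma unital_span1:
  fixes v :: "'a vec3"
  assumes "v \<noteq> zero3"
  shows "span1 v \<in> unital q \<longleftrightarrow> herm q v = 0"
proof
  assume "span1 v \<in> unital q"
  then obtain w where w: "w \<in> span1 v" "w \<noteq> zero3" "herm q w = 0" by (auto simp: unital_def)
  then obtain c where c: "w = sm c v" by (auto simp: span1_eq)
  hence "c \<noteq> 0" using w by (auto simp: sm_zero_iff)
  thus "herm q v = 0" using w c by (simp add: herm_sm)
next
  assume "herm q v = 0"
  moreover have "span1 v \<in> PG_points" using assms unfolding PG_points_def by blast
  ultimately show "span1 v \<in> unital q" using assms in_span1[of v] by (auto simp: unital_def)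
qed

lemma unital_eq: "unital q = span1 ` {v::'a vec3. v \<noteq> zero3 \<and> herm q v = 0}"
proof
  show "unital q \<subseteq> span1 ` {v::'a vec3. v \<noteq> zero3 \<and> herm q v = 0}"
  proof
    fix P assume P: "P \<in> (unital q :: 'a vec3 set set)"
    then obtain v :: "'a vec3" where v: "v \<noteq> zero3" "P = span1 v" by (auto simp: unital_def PG_points_def)
    hence "herm q v = 0" using P unital_span1 by auto
    thus "P \<in> span1 ` {v::'a vec3. v \<noteq> zero3 \<and> herm q v = 0}" using v by blast
  qed
  show "span1 ` {v::'a vec3. v \<noteq> zero3 \<and> herm q v = 0} \<subseteq> unital q" using unital_span1 by auto
qed

lemma point_count:
  fixes S :: "'a vec3 set"
  assumes "\<And>v. v \<in> S \<Longrightarrow> v \<noteq> zero3" "\<And>v c. v \<in> S \<Longrightarrow> c \<noteq> 0 \<Longrightarrow> sm c v \<in> S"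
  shows "card S = (q^2 - 1) * card (span1 ` S)"
proof -
  have "card S = (\<Sum>P\<in>span1 ` S. card {v\<in>S. span1 v = P})"
    by (rule card_fibers_sum) auto
  also have "\<dots> = (\<Sum>P\<in>span1 ` S. q^2 - 1)"
  proof (rule sum.cong[OF refl])
    fix P assume "P \<in> span1 ` S"
    then obtain w where w: "w \<in> S" "P = span1 w" by auto
    have w0: "w \<noteq> zero3" using assms w by auto
    have "{v\<in>S. span1 v = P} = (\<lambda>c. sm c w) ` (UNIV - {0})"
    proof
      show "{v\<in>S. span1 v = P} \<subseteq> (\<lambda>c. sm c w) ` (UNIV - {0})"
      proof
        fix v assume v: "v \<in> {v\<in>S. span1 v = P}"
        hence "v \<in> span1 w" using in_span1[of v] w by auto
        then obtain c where c: "v = sm c w" by (auto simp: span1_eq)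
        have "v \<noteq> zero3" using v assms(1) by blast
        hence "c \<noteq> 0" using c by (auto simp: sm_zero_iff)
        thus "v \<in> (\<lambda>c. sm c w) ` (UNIV - {0})" using c by auto
      qed
      show "(\<lambda>c. sm c w) ` (UNIV - {0}) \<subseteq> {v\<in>S. span1 v = P}"
      proof
        fix v assume "v \<in> (\<lambda>c. sm c w) ` (UNIV - {0})"
        then obtain c where c: "c \<noteq> 0" "v = sm c w" by auto
        hence "v \<in> S" using assms(2) w by auto
        moreover have "v \<noteq> zero3" using c w0 by (simp add: sm_zero_iff)
        moreover have "cross w v = zero3" using c cross_sm by simp
        moreover have "cross v w = zero3" using cross_anti \<open>cross w v = zero3\<close> by blast
        hence "span1 v = span1 w" using span1_eq_iff[OF \<open>v \<noteq> zero3\<close> w0] by simp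
        ultimately show "v \<in> {v\<in>S. span1 v = P}" using w by auto
      qed
    qed
    moreover have "inj_on (\<lambda>c. sm c w) (UNIV - {0})"
    proof (rule inj_onI)
      fix a b assume "sm a w = sm b w"
      hence "sm (a - b) w = zero3" by (cases w) (simp add: zero3_eq algebra_simps)
      thus "a = b" using w0 by (simp add: sm_zero_iff)
    qed
    ultimately show "card {v\<in>S. span1 v = P} = q^2 - 1"
      using cq by (simp add: card_image card_Diff_singleton)
  qed
  also have "\<dots> = (q^2 - 1) * card (span1 ` S)" by simp
  finally show ?thesis .
qed

lemma point_count':
  fixes S :: "'a vec3 set"
  assumes "\<And>v. v \<in> S \<Longrightarrow> v \<noteq> zero3" "\<And>v c. v \<in> S \<Longrightarrow> c \<noteq> 0 \<Longrightarrow> sm c v \<in> S"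
    and "card S = (q^2 - 1) * k"
  shows "card (span1 ` S) = k"
proof -
  have "q*q \<ge> 2*2" using q_ge2 mult_le_mono by blast
  hence "q^2 > (1::nat)" by (simp add: power2_eq_square)
  thus ?thesis using point_count[OF assms(1,2)] assms(3) by simp
qed

end


context U begin

lemma dot_zero[simp]: "dot (n::'a vec3) zero3 = 0" by (cases n) (simp add: zero3_eq)

lemma q2_ge1: "1 \<le> q^2" using q_ge2 by (simp add: power2_eq_square)

lemma int_q2m1: "int (q^2 - 1) = int q^2 - 1" using q2_ge1 by (simp add: of_nat_diff)

lemma int_q3: "int (q^3+q^2-q) = int q^3 + int q^2 - int q"
  using q_ge2 by (subst of_nat_diff) (auto simp: power2_eq_square power3_eq_cube intro: order_trans[OF _ le_add2])

lemma card_UNIV2: "card (UNIV :: ('a \<times> 'a) set) = q^4"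
  using cq by (simp add: UNIV_Times_UNIV[symmetric] card_cartesian_product del: UNIV_Times_UNIV)

lemma card_UNIV3: "card (UNIV :: 'a vec3 set) = q^6"
proof -
  have "card (UNIV :: 'a vec3 set) = card (UNIV::'a set) * card (UNIV :: ('a \<times> 'a) set)"
    by (simp add: UNIV_Times_UNIV[symmetric] card_cartesian_product del: UNIV_Times_UNIV)
  thus ?thesis using cq card_UNIV2 by (simp add: power_add[symmetric])
qed

lemma Fq_neg_sum: "- (nrm y + nrm z) \<in> Fq" by (simp add: Fq_def sg_minus sg_add sg_diff sg_nrm)

lemma card_herm0: "int (card {v::'a vec3. herm q v = 0}) = int q^5 - int q^3 + int q^2"
proof -
  define A where "A = {(y::'a,z::'a). nrm y + nrm z = 0}"
  have "{v::'a vec3. herm q v = 0} = {(x,p). herm q (x,p) = 0}" by auto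
  hence "card {v::'a vec3. herm q v = 0} = (\<Sum>p::'a\<times>'a\<in>UNIV. card {x::'a. herm q (x,p) = 0})"
    using card_pairs[of "\<lambda>x p. herm q ((x::'a),(p::'a\<times>'a)) = 0"] by simp
  also have "\<dots> = (\<Sum>p::'a\<times>'a\<in>UNIV. if p \<in> A then 1 else q + 1)"
  proof (rule sum.cong[OF refl])
    fix p :: "'a \<times> 'a"
    obtain y z where p: "p = (y,z)" by (cases p)
    have "{x::'a. herm q (x,p) = 0} = {x. nrm x = - (nrm y + nrm z)}"
      by (rule Collect_cong) (simp only: p herm_eq add.assoc add_eq_0_iff2)
    hence "card {x::'a. herm q (x,p) = 0} = (if - (nrm y + nrm z) = 0 then 1 else q + 1)"
      using nrm_count[OF Fq_neg_sum] by simp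
    moreover have e: "(-(nrm y + nrm z) = 0) \<longleftrightarrow> p \<in> A"
      by (simp only: A_def p neg_equal_0_iff_equal mem_Collect_eq case_prod_conv)
    ultimately show "card {x::'a. herm q (x,p) = 0} = (if p \<in> A then 1 else q + 1)" by (simp only: e)
  qed
  also have "\<dots> = (\<Sum>p::'a\<times>'a\<in>UNIV - A. if p \<in> A then 1 else q + 1) + (\<Sum>p\<in>A. if p \<in> A then 1 else q + 1)"
    by (rule sum.subset_diff) auto
  also have "\<dots> = (\<Sum>p\<in>UNIV - A. q + 1) + (\<Sum>p\<in>A. 1)"
    by (intro arg_cong2[where f="(+)"] sum.cong) auto
  also have "\<dots> = (q^4 - card A) * (q + 1) + card A"
    using card_UNIV2 by (simp add: card_Diff_subset)
  finally have 1: "card {v::'a vec3. herm q v = 0} = (q^4 - card A) * (q + 1) + card A" .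
  have "A = {(s,t). Qf 1 1 0 s t = 0}" by (simp add: A_def Qf_def)
  hence cA: "card A = q^3 + q^2 - q" using BF[of 1 1 0] by (simp add: Fq_def)
  have "card A \<le> q^4" using card_UNIV2 card_mono[of UNIV A] by simp
  hence d: "int (q^4 - card A) = int q^4 - int (card A)" by (simp add: of_nat_diff)
  have "int (card {v::'a vec3. herm q v = 0}) = (int q^4 - int (card A)) * (int q + 1) + int (card A)"
    by (simp only: 1 of_nat_add of_nat_mult d of_nat_1)
  also have "\<dots> = int q^5 - int q^3 + int q^2" unfolding cA int_q3 by algebra
  finally show ?thesis .
qed

definition ISO :: "'a vec3 set" where "ISO = {v. v \<noteq> zero3 \<and> herm q v = 0}"

lemma card_ISO: "card ISO = (q^2 - 1) * (q^3 + 1)"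
proof -
  have "{v::'a vec3. herm q v = 0} = insert zero3 ISO" by (auto simp: ISO_def)
  moreover have "card (insert zero3 ISO) = Suc (card ISO)" by (rule card_insert_disjoint) (auto simp: ISO_def)
  ultimately have "card {v::'a vec3. herm q v = 0} = Suc (card ISO)" by simp
  hence "int (card ISO) = int q^5 - int q^3 + int q^2 - 1" using card_herm0 by simp
  also have "\<dots> = int ((q^2 - 1) * (q^3 + 1))" by (simp only: of_nat_mult int_q2m1 of_nat_add of_nat_power of_nat_1) algebra
  finally show ?thesis by (simp only: of_nat_eq_iff)
qed

lemma card_unital: "card (unital q :: 'a vec3 set set) = q^3 + 1"
  unfolding unital_eq
  by (rule point_count') (simp_all add: ISO_def[symmetric] card_ISO, simp_all add: ISO_def sm_zero_iff herm_sm)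

definition NZ :: "'a vec3 set" where "NZ = {v. v \<noteq> zero3}"

lemma card_NZ: "card NZ = (q^2 - 1) * (q^4 + q^2 + 1)"
proof -
  have "UNIV = insert zero3 NZ" by (auto simp: NZ_def)
  moreover have "card (insert zero3 NZ) = Suc (card NZ)" by (rule card_insert_disjoint) (auto simp: NZ_def)
  ultimately have "card (UNIV :: 'a vec3 set) = Suc (card NZ)" by simp
  hence "int (card NZ) = int (q^6) - 1" using card_UNIV3 by simp
  also have "\<dots> = int ((q^2 - 1) * (q^4 + q^2 + 1))" by (simp only: of_nat_mult int_q2m1 of_nat_add of_nat_power of_nat_1) algebra
  finally show ?thesis by (simp only: of_nat_eq_iff)
qed

lemma card_PG_points: "card (PG_points :: 'a vec3 set set) = q^4 + q^2 + 1"
  unfolding PG_points_eq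
  by (rule point_count') (simp_all add: NZ_def[symmetric] card_NZ, simp_all add: NZ_def sm_zero_iff)

definition LV :: "'a vec3 \<Rightarrow> 'a vec3 set" where
  "LV n = {v. v \<noteq> zero3 \<and> herm q v = 0 \<and> dot n v = 0}"

lemma unital_on_line:
  "{P \<in> unital q. P \<subseteq> lineN n} = span1 ` LV n"
proof
  show "{P \<in> unital q. P \<subseteq> lineN n} \<subseteq> span1 ` LV n"
  proof
    fix P assume P: "P \<in> {P \<in> unital q. P \<subseteq> lineN n}"
    then obtain v where v: "v \<noteq> zero3" "herm q v = 0" "P = span1 v" by (auto simp: unital_eq)
    hence "dot n v = 0" using P span1_sub_lineN by blast
    thus "P \<in> span1 ` LV n" using v unfolding LV_def by blast
  qed
  show "span1 ` LV n \<subseteq> {P \<in> unital q. P \<subseteq> lineN n}"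
  proof
    fix P assume "P \<in> span1 ` LV n"
    then obtain v where v: "v \<noteq> zero3" "herm q v = 0" "dot n v = 0" "P = span1 v" by (auto simp: LV_def)
    hence "P \<subseteq> lineN n" using span1_sub_lineN by blast
    moreover have "P \<in> unital q" using v unital_span1 by simp
    ultimately show "P \<in> {P \<in> unital q. P \<subseteq> lineN n}" by blast
  qed
qed

lemma card_unital_on_line:
  fixes n :: "'a vec3"
  assumes "n \<noteq> zero3"
  shows "card {P \<in> unital q. P \<subseteq> lineN n} = (if herm q n = 0 then 1 else q + 1)"
proof -
  have "{v. dot n v = 0 \<and> herm q v = 0} = insert zero3 (LV n)"
    by (auto simp: LV_def)
  moreover have "card (insert zero3 (LV n)) = Suc (card (LV n))" by (rule card_insert_disjoint) (auto simp: LV_def)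
  ultimately have "card {v. dot n v = 0 \<and> herm q v = 0} = Suc (card (LV n))" by simp
  hence c: "Suc (card (LV n)) = (if herm q n = 0 then q^2 else q^3 + q^2 - q)"
    using W_count[OF assms] by simp
  have "card (LV n) = (q^2 - 1) * (if herm q n = 0 then 1 else q + 1)"
  proof (cases "herm q n = 0")
    case True thus ?thesis using c by simp
  next
    case False
    hence "int (card (LV n)) = int q^3 + int q^2 - int q - 1" using c int_q3
      by (metis add_diff_cancel_left' of_nat_Suc plus_1_eq_Suc)
    also have "\<dots> = int ((q^2 - 1) * (q + 1))" by (simp only: of_nat_mult int_q2m1 of_nat_add of_nat_power of_nat_1) algebra
    finally show ?thesis using False by (simp only: of_nat_eq_iff if_False)
  qed
  thus ?thesis unfolding unital_on_line
    by (intro point_count') (simp_all add: LV_def sm_zero_iff herm_sm dot_sm)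
qed

lemma lineN_secant_iff:
  fixes n :: "'a vec3"
  assumes "n \<noteq> zero3"
  shows "lineN n \<in> secants q \<longleftrightarrow> herm q n \<noteq> 0"
proof -
  have "lineN n \<in> PG_lines" using assms PG_lines_eq by blast
  thus ?thesis using card_unital_on_line[OF assms] q_ge2 by (auto simp: secants_def)
qed

definition SEC :: "'a vec3 set" where "SEC = {n. n \<noteq> zero3 \<and> herm q n \<noteq> 0}"

lemma secants_eq: "secants q = lineN ` SEC"
proof
  show "secants q \<subseteq> lineN ` SEC"
  proof
    fix L assume L: "L \<in> (secants q :: 'a vec3 set set)"
    hence "L \<in> PG_lines" by (simp add: secants_def)
    hence "L \<in> lineN ` {n::'a vec3. n \<noteq> zero3}" using PG_lines_eq by metis
    then obtain n :: "'a vec3" where n: "n \<noteq> zero3" "L = lineN n" by blast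
    thus "L \<in> lineN ` SEC" using L lineN_secant_iff[OF n(1)] by (auto simp: SEC_def)
  qed
  show "lineN ` SEC \<subseteq> secants q" using lineN_secant_iff by (auto simp: SEC_def)
qed

lemma card_secants: "card (secants q :: 'a vec3 set set) = q^2 * (q^2 - q + 1)"
proof -
  have "card (lineN ` SEC) = card (span1 ` SEC)"
    by (rule card_image_rel) (auto simp: SEC_def lineN_span1_iff)
  moreover have "card (span1 ` SEC) = q^2 * (q^2 - q + 1)"
  proof (rule point_count')
    have "SEC = NZ - ISO" by (auto simp: SEC_def NZ_def ISO_def)
    moreover have "ISO \<subseteq> NZ" by (auto simp: NZ_def ISO_def)
    ultimately have "card SEC = card NZ - card ISO" by (simp add: card_Diff_subset)
    hence "int (card SEC) = int (card NZ) - int (card ISO)"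
      using \<open>ISO \<subseteq> NZ\<close> card_mono[of NZ ISO] by (simp add: of_nat_diff)
    also have "\<dots> = int ((q^2 - 1) * (q^2 * (q^2 - q + 1)))"
    proof -
      have a: "int (card NZ) = (int q^2 - 1)*(int q^4+int q^2+1)"
        by (simp only: card_NZ of_nat_mult int_q2m1 of_nat_add of_nat_power of_nat_1)
      have b: "int (card ISO) = (int q^2 - 1)*(int q^3+1)"
        by (simp only: card_ISO of_nat_mult int_q2m1 of_nat_add of_nat_power of_nat_1)
      have "q \<le> q^2" by (simp add: power2_eq_square)
      hence c: "int (q^2 - q + 1) = int q^2 - int q + 1" by (simp add: of_nat_diff)
      have d: "int ((q^2 - 1) * (q^2 * (q^2 - q + 1))) = (int q^2 - 1) * (int q^2 * (int q^2 - int q + 1))"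
        by (simp only: of_nat_mult int_q2m1 c of_nat_power)
      show ?thesis unfolding a b d by algebra
    qed
    finally show "card SEC = (q^2 - 1) * (q^2 * (q^2 - q + 1))" by (simp only: of_nat_eq_iff)
  qed (simp_all add: SEC_def sm_zero_iff herm_sm)
  ultimately show ?thesis using secants_eq by simp
qed

end


context U begin

lemma q2_ge4: "q^2 \<ge> 4"
proof -
  have "q*q \<ge> 2*2" by (rule mult_le_mono[OF q_ge2 q_ge2])
  thus ?thesis by (simp add: power2_eq_square)
qed

lemma secant_rep:
  assumes "L \<in> (secants q :: 'a vec3 set set)"
  obtains n :: "'a vec3" where "n \<noteq> zero3" "herm q n \<noteq> 0" "L = lineN n"
  using assms secants_eq unfolding SEC_def by auto

lemma unital_rep:
  assumes "P \<in> (unital q :: 'a vec3 set set)"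
  obtains v :: "'a vec3" where "v \<noteq> zero3" "herm q v = 0" "P = span1 v"
  using assms unital_eq by auto

lemma finite_sets: "finite (A :: 'a vec3 set set)" by simp

lemma secants_inter:
  assumes "L \<in> (secants q :: 'a vec3 set set)" "M \<in> secants q" "L \<noteq> M"
  shows "\<exists>c. c \<noteq> zero3 \<and> L \<inter> M = span1 c"
proof -
  obtain n where n: "n \<noteq> zero3" "L = lineN n" using secant_rep[OF assms(1)] by metis
  obtain m where m: "m \<noteq> zero3" "M = lineN m" using secant_rep[OF assms(2)] by metis
  have "cross n m \<noteq> zero3" using lineN_eq_iff[OF n(1) m(1)] n m assms(3) by simp
  thus ?thesis using lineN_inter n m by blast
qed

lemma point_in_inter:
  assumes "L \<in> (secants q :: 'a vec3 set set)" "M \<in> secants q" "L \<noteq> M"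
    and "P \<in> unital q" "P \<subseteq> L" "P \<subseteq> M"
  shows "L \<inter> M = P"
proof -
  obtain c where c: "c \<noteq> zero3" "L \<inter> M = span1 c" using secants_inter[OF assms(1-3)] by blast
  obtain v where v: "v \<noteq> zero3" "P = span1 v" using unital_rep[OF assms(4)] by metis
  have "span1 v \<subseteq> span1 c" using assms(5,6) c v by auto
  thus ?thesis using span1_sub_eq[OF c(1) v(1)] c v by simp
qed

lemma clique_at_rep:
  fixes v :: "'a vec3"
  assumes "v \<noteq> zero3"
  shows "clique_at q (span1 v) = lineN ` {n. n \<noteq> zero3 \<and> herm q n \<noteq> 0 \<and> dot v n = 0}"
proof -
  have "clique_at q (span1 v) = {L \<in> lineN ` SEC. span1 v \<subseteq> L}"
    unfolding clique_at_def secants_eq ..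
  also have "\<dots> = lineN ` {n. n \<noteq> zero3 \<and> herm q n \<noteq> 0 \<and> dot v n = 0}"
  proof
    show "{L \<in> lineN ` SEC. span1 v \<subseteq> L} \<subseteq> lineN ` {n. n \<noteq> zero3 \<and> herm q n \<noteq> 0 \<and> dot v n = 0}"
    proof
      fix L assume "L \<in> {L \<in> lineN ` SEC. span1 v \<subseteq> L}"
      then obtain n where n: "n \<in> SEC" "L = lineN n" "span1 v \<subseteq> lineN n" by blast
      hence "dot v n = 0" using span1_sub_lineN dot_comm by metis
      thus "L \<in> lineN ` {n. n \<noteq> zero3 \<and> herm q n \<noteq> 0 \<and> dot v n = 0}" using n unfolding SEC_def by blast
    qed
    show "lineN ` {n. n \<noteq> zero3 \<and> herm q n \<noteq> 0 \<and> dot v n = 0} \<subseteq> {L \<in> lineN ` SEC. span1 v \<subseteq> L}"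
    proof
      fix L assume "L \<in> lineN ` {n. n \<noteq> zero3 \<and> herm q n \<noteq> 0 \<and> dot v n = 0}"
      then obtain n where n: "n \<noteq> zero3" "herm q n \<noteq> 0" "dot v n = 0" "L = lineN n" by blast
      hence "span1 v \<subseteq> lineN n" using span1_sub_lineN dot_comm by metis
      thus "L \<in> {L \<in> lineN ` SEC. span1 v \<subseteq> L}" using n unfolding SEC_def by blast
    qed
  qed
  finally show ?thesis .
qed

lemma card_clique_at:
  assumes "P \<in> (unital q :: 'a vec3 set set)"
  shows "card (clique_at q P) = q^2"
proof -
  obtain v :: "'a vec3" where v: "v \<noteq> zero3" "herm q v = 0" "P = span1 v" using unital_rep[OF assms] by metis
  define T where "T = {n. n \<noteq> zero3 \<and> herm q n \<noteq> 0 \<and> dot v n = 0}"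
  have "card (clique_at q P) = card (lineN ` T)" using clique_at_rep[OF v(1)] v(3) T_def by simp
  also have "\<dots> = card (span1 ` T)"
    by (rule card_image_rel) (auto simp: T_def lineN_span1_iff)
  also have "\<dots> = q^2"
  proof (rule point_count')
    have "T = {n. dot v n = 0} - {n. dot v n = 0 \<and> herm q n = 0}"
      by (auto simp: T_def)
    hence "card T = card {n. dot v n = 0} - card {n. dot v n = 0 \<and> herm q n = 0}"
      by (simp add: card_Diff_subset Collect_mono)
    also have "\<dots> = q^4 - q^2" using W_count[OF v(1)] v(2) by simp
    also have "\<dots> = (q^2 - 1) * q^2" by (simp add: diff_mult_distrib power2_eq_square power4_eq_xxxx)
    finally show "card T = (q^2 - 1) * q^2" .
  qed (simp_all add: T_def sm_zero_iff herm_sm dot_sm)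
  finally show ?thesis .
qed

lemma clique_inter:
  assumes "P \<in> (unital q :: 'a vec3 set set)" "Q \<in> unital q" "P \<noteq> Q"
  shows "\<exists>L. clique_at q P \<inter> clique_at q Q = {L}"
proof -
  obtain v :: "'a vec3" where v: "v \<noteq> zero3" "herm q v = 0" "P = span1 v" using unital_rep[OF assms(1)] by metis
  obtain w :: "'a vec3" where w: "w \<noteq> zero3" "herm q w = 0" "Q = span1 w" using unital_rep[OF assms(2)] by metis
  define c where "c = cross v w"
  have c0: "c \<noteq> zero3" using span1_eq_iff[OF v(1) w(1)] assms(3) v w c_def by simp
  have "dot c v = 0" "dot c w = 0" unfolding c_def by (metis dot_comm dot_cross1, metis dot_comm dot_cross2)
  hence PQ: "P \<subseteq> lineN c" "Q \<subseteq> lineN c" using v w by (simp_all add: span1_sub_lineN)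
  have "herm q c \<noteq> 0"
  proof
    assume "herm q c = 0"
    hence "card {R \<in> unital q. R \<subseteq> lineN c} = 1" using card_unital_on_line[OF c0] by simp
    moreover have "{P, Q} \<subseteq> {R \<in> unital q. R \<subseteq> lineN c}" using PQ assms by auto
    hence "card {P, Q} \<le> card {R \<in> unital q. R \<subseteq> lineN c}" by (intro card_mono finite_sets)
    ultimately have "card {P,Q} \<le> 1" by simp
    thus False using assms(3) by simp
  qed
  hence sec: "lineN c \<in> secants q" using lineN_secant_iff[OF c0] by simp
  have "clique_at q P \<inter> clique_at q Q = {lineN c}"
  proof
    show "{lineN c} \<subseteq> clique_at q P \<inter> clique_at q Q" using sec PQ by (auto simp: clique_at_def)
    show "clique_at q P \<inter> clique_at q Q \<subseteq> {lineN c}"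
    proof
      fix L assume L: "L \<in> clique_at q P \<inter> clique_at q Q"
      hence Ls: "L \<in> secants q" by (auto simp: clique_at_def)
      obtain n where n: "n \<noteq> zero3" "L = lineN n" using secant_rep[OF Ls] by metis
      have "P \<subseteq> L" "Q \<subseteq> L" using L by (auto simp: clique_at_def)
      hence "dot n v = 0" "dot n w = 0" using n v w by (simp_all add: span1_sub_lineN)
      hence "cross n c = zero3" unfolding c_def by (intro cross_cross_zero)
      hence "lineN n = lineN c" using lineN_eq_iff[OF n(1) c0] by simp
      thus "L \<in> {lineN c}" using n by simp
    qed
  qed
  thus ?thesis by blast
qed

lemma clique_at_inj: "inj_on (clique_at q) (unital q :: 'a vec3 set set)"
proof (rule inj_onI)
  fix P Q :: "'a vec3 set" assume P: "P \<in> unital q" and Q: "Q \<in> unital q" and e: "clique_at q P = clique_at q Q"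
  show "P = Q"
  proof (rule ccontr)
    assume "P \<noteq> Q"
    then obtain L where "clique_at q P \<inter> clique_at q Q = {L}" using clique_inter[OF P Q] by blast
    hence "card (clique_at q P) = 1" using e by simp
    hence "q^2 = 1" using card_clique_at[OF P] by simp
    thus False using q2_ge4 by simp
  qed
qed

lemma card_cliqueFamily: "card (cliqueFamily q :: 'a vec3 set set set) = q^3 + 1"
  unfolding cliqueFamily_def using card_image[OF clique_at_inj] card_unital by simp

lemma cliqueFamily_inter:
  assumes "K1 \<in> (cliqueFamily q :: 'a vec3 set set set)" "K2 \<in> cliqueFamily q" "K1 \<noteq> K2"
  shows "card (K1 \<inter> K2) = 1"
proof -
  obtain P where P: "P \<in> unital q" "K1 = clique_at q P" using assms(1) by (auto simp: cliqueFamily_def)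
  obtain Q where Q: "Q \<in> unital q" "K2 = clique_at q Q" using assms(2) by (auto simp: cliqueFamily_def)
  have "P \<noteq> Q" using P Q assms(3) by auto
  then obtain L where "clique_at q P \<inter> clique_at q Q = {L}" using clique_inter[OF P(1) Q(1)] by blast
  thus ?thesis using P Q by simp
qed

lemma line_points:
  assumes "L \<in> (secants q :: 'a vec3 set set)"
  shows "card {P \<in> unital q. P \<subseteq> L} = q + 1"
  using assms by (simp add: secants_def)

lemma cliques_through_line:
  assumes "L \<in> (secants q :: 'a vec3 set set)"
  shows "card {K \<in> cliqueFamily q. L \<in> K} = q + 1"
proof -
  have "{K \<in> cliqueFamily q. L \<in> K} = clique_at q ` {P \<in> unital q. P \<subseteq> L}"
  proof
    show "{K \<in> cliqueFamily q. L \<in> K} \<subseteq> clique_at q ` {P \<in> unital q. P \<subseteq> L}"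
    proof
      fix K assume K: "K \<in> {K \<in> cliqueFamily q. L \<in> K}"
      then obtain P where P: "P \<in> unital q" "K = clique_at q P" by (auto simp: cliqueFamily_def)
      hence "P \<subseteq> L" using K by (simp add: clique_at_def)
      thus "K \<in> clique_at q ` {P \<in> unital q. P \<subseteq> L}" using P by blast
    qed
    show "clique_at q ` {P \<in> unital q. P \<subseteq> L} \<subseteq> {K \<in> cliqueFamily q. L \<in> K}"
    proof
      fix K assume "K \<in> clique_at q ` {P \<in> unital q. P \<subseteq> L}"
      then obtain P where P: "P \<in> unital q" "P \<subseteq> L" "K = clique_at q P" by blast
      hence "L \<in> K" using assms by (simp add: clique_at_def)
      moreover have "K \<in> cliqueFamily q" using P by (simp add: cliqueFamily_def)
      ultimately show "K \<in> {K \<in> cliqueFamily q. L \<in> K}" by blast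
    qed
  qed
  moreover have "inj_on (clique_at q) {P \<in> unital q. P \<subseteq> L}"
    using clique_at_inj by (rule inj_on_subset) auto
  ultimately have "card {K \<in> cliqueFamily q. L \<in> K} = card {P \<in> unital q. P \<subseteq> L}"
    by (simp add: card_image)
  thus ?thesis using line_points[OF assms] by simp
qed

lemma degree:
  assumes L: "L \<in> (secants q :: 'a vec3 set set)"
  shows "card {M. Hadj q L M} = (q + 1) * (q^2 - 1)"
proof -
  define U where "U = {P \<in> unital q. P \<subseteq> L}"
  have eq: "{M. Hadj q L M} = (\<Union>P\<in>U. clique_at q P - {L})"
  proof
    show "{M. Hadj q L M} \<subseteq> (\<Union>P\<in>U. clique_at q P - {L})"
    proof
      fix M assume "M \<in> {M. Hadj q L M}"
      hence H: "M \<in> secants q" "L \<noteq> M" "L \<inter> M \<in> unital q" by (auto simp: Hadj_def)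
      hence "L \<inter> M \<in> U" "M \<in> clique_at q (L \<inter> M)" by (auto simp: U_def clique_at_def)
      thus "M \<in> (\<Union>P\<in>U. clique_at q P - {L})" using H by auto
    qed
    show "(\<Union>P\<in>U. clique_at q P - {L}) \<subseteq> {M. Hadj q L M}"
    proof
      fix M assume "M \<in> (\<Union>P\<in>U. clique_at q P - {L})"
      then obtain P where P: "P \<in> U" "M \<in> clique_at q P" "M \<noteq> L" by auto
      have "M \<in> secants q" "P \<subseteq> M" "P \<in> unital q" "P \<subseteq> L" using P by (auto simp: U_def clique_at_def)
      hence "L \<inter> M = P" using point_in_inter[OF L] P(3) by metis
      thus "M \<in> {M. Hadj q L M}" using P L by (auto simp: U_def clique_at_def Hadj_def)
    qed
  qed
  have "card (\<Union>P\<in>U. clique_at q P - {L}) = (\<Sum>P\<in>U. card (clique_at q P - {L}))"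
  proof (rule card_UN_disjoint)
    show "\<forall>P\<in>U. \<forall>Q\<in>U. P \<noteq> Q \<longrightarrow> (clique_at q P - {L}) \<inter> (clique_at q Q - {L}) = {}"
    proof (intro ballI impI)
      fix P Q assume PQ: "P \<in> U" "Q \<in> U" "P \<noteq> Q"
      show "(clique_at q P - {L}) \<inter> (clique_at q Q - {L}) = {}"
      proof (rule ccontr)
        assume "\<not> ?thesis"
        then obtain M where M: "M \<in> clique_at q P" "M \<in> clique_at q Q" "M \<noteq> L" by auto
        have a: "M \<in> secants q" "P \<subseteq> M" "Q \<subseteq> M" using M by (auto simp: clique_at_def)
        have b: "P \<in> unital q" "P \<subseteq> L" "Q \<in> unital q" "Q \<subseteq> L" using PQ by (auto simp: U_def)
        have "L \<inter> M = P" using point_in_inter[OF L a(1)] M(3) a b by metis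
        moreover have "L \<inter> M = Q" using point_in_inter[OF L a(1)] M(3) a b by metis
        ultimately show False using PQ by simp
      qed
    qed
  qed simp_all
  also have "\<dots> = (\<Sum>P\<in>U. q^2 - 1)"
  proof (rule sum.cong[OF refl])
    fix P assume "P \<in> U"
    hence "L \<in> clique_at q P" "P \<in> unital q" using L by (auto simp: U_def clique_at_def)
    thus "card (clique_at q P - {L}) = q^2 - 1" using card_clique_at by (simp add: card_Diff_singleton)
  qed
  also have "\<dots> = (q + 1) * (q^2 - 1)" using line_points[OF L] by (simp add: U_def)
  finally show ?thesis using eq by simp
qed

lemma clique_at_is_clique:
  assumes "P \<in> (unital q :: 'a vec3 set set)"
  shows "is_clique q (clique_at q P)"
  unfolding is_clique_def
proof (intro conjI ballI impI)
  show "clique_at q P \<subseteq> secants q" by (auto simp: clique_at_def)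
  fix L M assume LM: "L \<in> clique_at q P" "M \<in> clique_at q P" "L \<noteq> M"
  have a: "L \<in> secants q" "M \<in> secants q" "P \<subseteq> L" "P \<subseteq> M" using LM by (auto simp: clique_at_def)
  hence "L \<inter> M = P" using point_in_inter[OF a(1,2) LM(3) assms] by simp
  thus "Hadj q L M" using LM assms by (auto simp: Hadj_def clique_at_def)
qed

lemma clique_at_maximal:
  assumes P: "P \<in> (unital q :: 'a vec3 set set)"
  shows "is_maximal_clique q (clique_at q P)"
  unfolding is_maximal_clique_def
proof (intro conjI allI impI)
  show "is_clique q (clique_at q P)" using clique_at_is_clique[OF P] .
  fix K' assume K': "is_clique q K' \<and> clique_at q P \<subseteq> K'"
  show "K' = clique_at q P"
  proof (rule ccontr)
    assume "K' \<noteq> clique_at q P"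
    then obtain M where M: "M \<in> K'" "M \<notin> clique_at q P" using K' by blast
    have Ms: "M \<in> secants q" using M K' by (auto simp: is_clique_def)
    hence PM: "\<not> P \<subseteq> M" using M by (auto simp: clique_at_def)
    define f where "f = (\<lambda>L. L \<inter> M)"
    have fin: "f ` clique_at q P \<subseteq> {R \<in> unital q. R \<subseteq> M}"
    proof
      fix R assume "R \<in> f ` clique_at q P"
      then obtain L where L: "L \<in> clique_at q P" "R = L \<inter> M" by (auto simp: f_def)
      have "L \<noteq> M" using L M by auto
      hence "Hadj q L M" using K' L M by (auto simp: is_clique_def)
      thus "R \<in> {R \<in> unital q. R \<subseteq> M}" using L by (auto simp: Hadj_def)
    qed
    have inj: "inj_on f (clique_at q P)"
    proof (rule inj_onI)
      fix L L' assume LL: "L \<in> clique_at q P" "L' \<in> clique_at q P" "f L = f L'"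
      have R: "f L \<in> unital q" "f L \<subseteq> M" using fin LL by auto
      have "f L \<noteq> P" using R PM by auto
      then obtain X where X: "clique_at q P \<inter> clique_at q (f L) = {X}" using clique_inter[OF P R(1)] by metis
      have "L \<in> clique_at q (f L)" "L' \<in> clique_at q (f L)" using LL by (auto simp: clique_at_def f_def)
      thus "L = L'" using X LL by blast
    qed
    have "card (clique_at q P) \<le> card {R \<in> unital q. R \<subseteq> M}"
      using card_inj_on_le[OF inj fin] by simp
    hence "q^2 \<le> q + 1" using card_clique_at[OF P] line_points[OF Ms] by simp
    moreover have "q * q \<ge> 2 * q" by (rule mult_le_mono1[OF q_ge2])
    ultimately show False using q_ge2 unfolding power2_eq_square by linarith
  qed
qed

end


definition det3 :: "'a::field vec3 \<Rightarrow> 'a vec3 \<Rightarrow> 'a vec3 \<Rightarrow> 'a" where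
  "det3 a b c = dot a (cross b c)"

lemma gram_full:
  fixes x1 x2 x3 y1 y2 y3 z1 z2 z3 a1 a2 a3 b1 b2 b3 c1 c2 c3 :: "'a::comm_ring_1"
  shows "(x1*a1+x2*a2+x3*a3)*((y1*b1+y2*b2+y3*b3)*(z1*c1+z2*c2+z3*c3) - (y1*c1+y2*c2+y3*c3)*(z1*b1+z2*b2+z3*b3))
       - (x1*b1+x2*b2+x3*b3)*((y1*a1+y2*a2+y3*a3)*(z1*c1+z2*c2+z3*c3) - (y1*c1+y2*c2+y3*c3)*(z1*a1+z2*a2+z3*a3))
       + (x1*c1+x2*c2+x3*c3)*((y1*a1+y2*a2+y3*a3)*(z1*b1+z2*b2+z3*b3) - (y1*b1+y2*b2+y3*b3)*(z1*a1+z2*a2+z3*a3))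
     = (x1*(y2*z3-y3*z2) + x2*(y3*z1-y1*z3) + x3*(y1*z2-y2*z1)) * (a1*(b2*c3-b3*c2) + a2*(b3*c1-b1*c3) + a3*(b1*c2-b2*c1))"
  by (simp add: algebra_simps)

lemma det_cross_cross:
  fixes a b c :: "'a::field vec3"
  shows "det3 (cross b c) (cross c a) (cross a b) = (det3 a b c)^2"
  by (cases a; cases b; cases c) (simp add: det3_def power2_eq_square algebra_simps)

lemma rep1:
  fixes a b c d :: "'a::field vec3"
  shows "sm (det3 a b c) (cross d a) = lincomb (det3 a b d) (cross c a) (- det3 a d c) (cross a b)"
  by (cases a; cases b; cases c; cases d) (simp add: det3_def lincomb_def algebra_simps)

lemma rep2:
  fixes a b c d :: "'a::field vec3"
  shows "sm (det3 a b c) (cross d b) = lincomb (det3 d b c) (cross a b) (- det3 a b d) (cross b c)"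
  by (cases a; cases b; cases c; cases d) (simp add: det3_def lincomb_def algebra_simps)

lemma rep3:
  fixes a b c d :: "'a::field vec3"
  shows "sm (det3 a b c) (cross d c) = lincomb (det3 a d c) (cross b c) (- det3 d b c) (cross c a)"
  by (cases a; cases b; cases c; cases d) (simp add: det3_def lincomb_def algebra_simps)

lemma cross_swap: "cross b a = sm (-1) (cross a (b::'a::field vec3))"
  by (cases a; cases b) (simp add: algebra_simps)

lemma det3_cyc1: "dot c (cross a b) = det3 a b (c::'a::field vec3)"
  by (cases a; cases b; cases c) (simp add: det3_def algebra_simps)
lemma det3_cyc2: "dot b (cross a c) = - det3 a b (c::'a::field vec3)"
  by (cases a; cases b; cases c) (simp add: det3_def algebra_simps)

context U begin

definition sgv :: "'a vec3 \<Rightarrow> 'a vec3" where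
  "sgv v = (case v of (x,y,z) \<Rightarrow> (sg x, sg y, sg z))"

definition hh :: "'a vec3 \<Rightarrow> 'a vec3 \<Rightarrow> 'a" where
  "hh u v = dot u (sgv v)"

lemma herm_hh: "herm q v = hh v v"
  by (cases v) (simp add: herm_eq hh_def sgv_def nrm_def)

lemma hh_swap: "hh Z Y = sg (hh Y Z)"
  by (cases Y; cases Z) (simp add: hh_def sgv_def sg_add sg_mult mult.commute)

lemma herm_lincomb:
  "herm q (lincomb s Y t Z) = nrm s * hh Y Y + nrm t * hh Z Z + s * sg t * hh Y Z + t * sg s * hh Z Y"
  by (cases Y; cases Z) (simp add: herm_eq hh_def sgv_def lincomb_def nrm_def sg_add sg_mult algebra_simps)

lemma sg_det: "sg (det3 X Y Z) = det3 (sgv X) (sgv Y) (sgv Z)"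
  by (cases X; cases Y; cases Z) (simp add: det3_def sgv_def sg_add sg_mult sg_diff)

lemma gram:
  assumes "hh X X = 0" "hh Y Y = 0" "hh Z Z = 0"
  shows "hh Y Z * hh Z X * hh X Y + hh Z Y * hh X Z * hh Y X = det3 X Y Z * sg (det3 X Y Z)"
proof -
  obtain x1 x2 x3 where X: "X = (x1,x2,x3)" by (cases X)
  obtain y1 y2 y3 where Y: "Y = (y1,y2,y3)" by (cases Y)
  obtain z1 z2 z3 where Z: "Z = (z1,z2,z3)" by (cases Z)
  note g = gram_full[of x1 "sg x1" x2 "sg x2" x3 "sg x3" y1 "sg y1" y2 "sg y2" y3 "sg y3" z1 "sg z1" z2 "sg z2" z3 "sg z3"]
  have a: "x1*sg x1+x2*sg x2+x3*sg x3 = 0" "y1*sg y1+y2*sg y2+y3*sg y3 = 0" "z1*sg z1+z2*sg z2+z3*sg z3 = 0"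
    using assms by (simp_all add: hh_def sgv_def X Y Z)
  have "det3 X Y Z * sg (det3 X Y Z) = det3 X Y Z * det3 (sgv X) (sgv Y) (sgv Z)" by (simp add: sg_det)
  also have "\<dots> = (x1*sg x1+x2*sg x2+x3*sg x3)*((y1*sg y1+y2*sg y2+y3*sg y3)*(z1*sg z1+z2*sg z2+z3*sg z3) - (y1*sg z1+y2*sg z2+y3*sg z3)*(z1*sg y1+z2*sg y2+z3*sg y3))
       - (x1*sg y1+x2*sg y2+x3*sg y3)*((y1*sg x1+y2*sg x2+y3*sg x3)*(z1*sg z1+z2*sg z2+z3*sg z3) - (y1*sg z1+y2*sg z2+y3*sg z3)*(z1*sg x1+z2*sg x2+z3*sg x3))
       + (x1*sg z1+x2*sg z2+x3*sg z3)*((y1*sg x1+y2*sg x2+y3*sg x3)*(z1*sg y1+z2*sg y2+z3*sg y3) - (y1*sg y1+y2*sg y2+y3*sg y3)*(z1*sg x1+z2*sg x2+z3*sg x3))"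
    using g by (simp add: X Y Z det3_def sgv_def)
  also have "\<dots> = hh Y Z * hh Z X * hh X Y + hh Z Y * hh X Z * hh Y X"
    unfolding a by (simp add: hh_def sgv_def X Y Z algebra_simps)
  finally show ?thesis by simp
qed

lemma trace_zero:
  assumes "herm q (lincomb s Y t Z) = 0" "herm q Y = 0" "herm q Z = 0"
  shows "sg (s * sg t * hh Y Z) = - (s * sg t * hh Y Z)"
proof -
  have "s * sg t * hh Y Z + t * sg s * hh Z Y = 0"
    using assms herm_lincomb[of s Y t Z] by (simp add: herm_hh)
  moreover have "sg (s * sg t * hh Y Z) = t * sg s * hh Z Y"
    by (simp add: sg_mult hh_swap[of Z Y] mult_ac)
  ultimately show ?thesis by (simp add: eq_neg_iff_add_eq_0 add.commute)
qed

lemma onan_core: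
  fixes X Y Z :: "'a vec3" and A B C :: 'a
  assumes iso: "herm q X = 0" "herm q Y = 0" "herm q Z = 0"
    and det: "det3 X Y Z \<noteq> 0" and ABC: "A \<noteq> 0" "B \<noteq> 0" "C \<noteq> 0"
    and D: "herm q (lincomb A Y (-B) Z) = 0"
    and E: "herm q (lincomb C Z (-A) X) = 0"
    and F: "herm q (lincomb B X (-C) Y) = 0"
  shows False
proof -
  define u where "u = A * sg (-B) * hh Y Z"
  define v where "v = C * sg (-A) * hh Z X"
  define w where "w = B * sg (-C) * hh X Y"
  have su: "sg u = - u" unfolding u_def by (rule trace_zero[OF D iso(2,3)])
  have sv: "sg v = - v" unfolding v_def by (rule trace_zero[OF E iso(3,1)])
  have sw: "sg w = - w" unfolding w_def by (rule trace_zero[OF F iso(1,2)])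
  define N where "N = nrm A * nrm B * nrm C"
  define P where "P = hh Y Z * hh Z X * hh X Y"
  have N0: "N \<noteq> 0" using ABC by (simp add: N_def)
  have sN: "sg N = N" by (simp add: N_def sg_mult sg_nrm)
  have uvw: "u * v * w = - (N * P)"
    by (simp add: u_def v_def w_def N_def P_def nrm_def sg_minus algebra_simps)
  have "sg (u * v * w) = - (u * v * w)" using su sv sw by (simp add: sg_mult)
  hence "- (N * sg P) = N * P" unfolding uvw by (simp add: sg_minus sg_mult sN)
  hence "N * sg P + N * P = 0" by (simp only: neg_eq_iff_add_eq_0)
  hence "N * (P + sg P) = 0" by (simp add: distrib_left add.commute)
  hence PP: "P + sg P = 0" using N0 by simp
  have "sg P = hh Z Y * hh X Z * hh Y X"
    by (simp add: P_def sg_mult hh_swap[of Z Y, symmetric] hh_swap[of X Z, symmetric] hh_swap[of Y X, symmetric])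
  hence "det3 X Y Z * sg (det3 X Y Z) = 0"
    using gram[of X Y Z] iso PP by (simp add: herm_hh P_def mult_ac)
  thus False using det by simp
qed

end


context U begin

lemma pair_facts:
  fixes x y :: "'a vec3 set" and xi eta :: "'a vec3"
  assumes H: "Hadj q x y" and x: "x = lineN xi" "xi \<noteq> zero3" and y: "y = lineN eta" "eta \<noteq> zero3"
  shows "cross xi eta \<noteq> zero3 \<and> herm q (cross xi eta) = 0 \<and> span1 (cross xi eta) \<in> unital q
         \<and> span1 (cross xi eta) \<subseteq> x \<and> span1 (cross xi eta) \<subseteq> y"
proof -
  have ne: "x \<noteq> y" using H by (simp add: Hadj_def)
  hence c: "cross xi eta \<noteq> zero3" using lineN_eq_iff[OF x(2) y(2)] x y by simp
  have i: "x \<inter> y = span1 (cross xi eta)" using lineN_inter[OF c] x y by simp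
  hence u: "span1 (cross xi eta) \<in> unital q" using H by (simp add: Hadj_def)
  hence "herm q (cross xi eta) = 0" using unital_span1[OF c] by simp
  thus ?thesis using c u i by auto
qed

lemma Hadj_sym: "Hadj q L M = Hadj q M L"
  by (auto simp: Hadj_def Int_commute)

lemma K4:
  fixes a b c d :: "'a vec3 set"
  assumes dist: "distinct [a, b, c, d]"
    and H: "Hadj q a b" "Hadj q a c" "Hadj q a d" "Hadj q b c" "Hadj q b d" "Hadj q c d"
  shows "\<exists>K \<in> cliqueFamily q. card ({a, b, c, d} \<inter> K) \<ge> 3"
proof (rule ccontr)
  assume neg: "\<not> ?thesis"
  have sec: "a \<in> secants q" "b \<in> secants q" "c \<in> secants q" "d \<in> secants q"
    using H by (auto simp: Hadj_def)
  have three: False if xyz: "x \<in> {a,b,c,d}" "y \<in> {a,b,c,d}" "z \<in> {a,b,c,d}" "x \<noteq> y" "x \<noteq> z" "y \<noteq> z"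
     and P: "P \<in> unital q" "P \<subseteq> x" "P \<subseteq> y" "P \<subseteq> z" for x y z P :: "'a vec3 set"
  proof -
    have s: "x \<in> secants q" "y \<in> secants q" "z \<in> secants q" using xyz sec by auto
    have K: "clique_at q P \<in> cliqueFamily q" using P by (simp add: cliqueFamily_def)
    have "{x,y,z} \<subseteq> {a,b,c,d} \<inter> clique_at q P" using xyz s P by (auto simp: clique_at_def)
    hence "card {x,y,z} \<le> card ({a,b,c,d} \<inter> clique_at q P)" by (intro card_mono) auto
    moreover have "card {x,y,z} = 3" using xyz by simp
    ultimately show False using neg K by auto
  qed
  obtain al :: "'a vec3" where al: "al \<noteq> zero3" "a = lineN al" using secant_rep[OF sec(1)] by metis
  obtain be :: "'a vec3" where be: "be \<noteq> zero3" "b = lineN be" using secant_rep[OF sec(2)] by metis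
  obtain ga :: "'a vec3" where ga: "ga \<noteq> zero3" "c = lineN ga" using secant_rep[OF sec(3)] by metis
  obtain de :: "'a vec3" where de: "de \<noteq> zero3" "d = lineN de" using secant_rep[OF sec(4)] by metis
  have noncon: "det3 xi eta zeta \<noteq> 0"
    if xyz: "x \<in> {a,b,c,d}" "y \<in> {a,b,c,d}" "z \<in> {a,b,c,d}" "x \<noteq> y" "x \<noteq> z" "y \<noteq> z"
      and Hxy: "Hadj q x y" and n: "x = lineN xi" "xi \<noteq> zero3" "y = lineN eta" "eta \<noteq> zero3" "z = lineN zeta"
    for x y z :: "'a vec3 set" and xi eta zeta :: "'a vec3"
  proof
    assume "det3 xi eta zeta = 0"
    hence "dot zeta (cross xi eta) = 0" by (simp add: det3_cyc1)
    hence "span1 (cross xi eta) \<subseteq> z" using n by (simp add: span1_sub_lineN)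
    moreover note pf = pair_facts[OF Hxy n(1,2,3,4)]
    ultimately show False using three[OF xyz] by blast
  qed
  have hc: "herm q (cross xi eta) = 0"
    if "Hadj q x y" "x = lineN xi" "xi \<noteq> zero3" "y = lineN eta" "eta \<noteq> zero3" for x y :: "'a vec3 set" and xi eta :: "'a vec3"
    using pair_facts[OF that] by simp
  have hc': "herm q (cross eta xi) = 0"
    if "Hadj q x y" "x = lineN xi" "xi \<noteq> zero3" "y = lineN eta" "eta \<noteq> zero3" for x y :: "'a vec3 set" and xi eta :: "'a vec3"
    using hc[OF that] by (simp add: cross_swap[of xi eta] herm_sm)
  have dist': "a \<noteq> b" "a \<noteq> c" "a \<noteq> d" "b \<noteq> c" "b \<noteq> d" "c \<noteq> d" using dist by auto
  define Dl where "Dl = det3 al be ga"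
  define A where "A = det3 al be de"
  define B where "B = det3 al de ga"
  define C where "C = det3 de be ga"
  have Dl0: "Dl \<noteq> 0" unfolding Dl_def
    by (rule noncon[of a b c al be ga]) (insert dist' H al be ga, simp_all)
  have A0: "A \<noteq> 0" unfolding A_def
    by (rule noncon[of a b d al be de]) (insert dist' H al be de, simp_all)
  have B0: "B \<noteq> 0" unfolding B_def
    by (rule noncon[of a d c al de ga]) (insert dist' H al de ga, simp_all)
  have C0: "C \<noteq> 0" unfolding C_def
    by (rule noncon[of d b c de be ga]) (insert dist' H be de ga Hadj_sym[of d b], simp_all)
  define X where "X = cross be ga"
  define Y where "Y = cross ga al"
  define Z where "Z = cross al be"
  have isoX: "herm q X = 0" unfolding X_def by (rule hc[OF H(4) be(2) be(1) ga(2) ga(1)])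
  have isoY: "herm q Y = 0" unfolding Y_def by (rule hc'[OF H(2) al(2) al(1) ga(2) ga(1)])
  have isoZ: "herm q Z = 0" unfolding Z_def by (rule hc[OF H(1) al(2) al(1) be(2) be(1)])
  have det: "det3 X Y Z \<noteq> 0" unfolding X_def Y_def Z_def det_cross_cross using Dl0 by (simp add: Dl_def)
  have hD: "herm q (cross de al) = 0" by (rule hc'[OF H(3) al(2) al(1) de(2) de(1)])
  have hE: "herm q (cross de be) = 0" by (rule hc'[OF H(5) be(2) be(1) de(2) de(1)])
  have hF: "herm q (cross de ga) = 0" by (rule hc'[OF H(6) ga(2) ga(1) de(2) de(1)])
  have D: "herm q (lincomb A Y (-B) Z) = 0"
  proof -
    have "herm q (lincomb A Y (-B) Z) = herm q (sm Dl (cross de al))" using rep1[of al be ga de] by (simp add: A_def B_def Y_def Z_def Dl_def)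
    also have "\<dots> = 0" using hD by (simp add: herm_sm)
    finally show ?thesis .
  qed
  have E: "herm q (lincomb C Z (-A) X) = 0"
  proof -
    have "herm q (lincomb C Z (-A) X) = herm q (sm Dl (cross de be))" using rep2[of al be ga de] by (simp add: A_def C_def X_def Z_def Dl_def)
    also have "\<dots> = 0" using hE by (simp add: herm_sm)
    finally show ?thesis .
  qed
  have F: "herm q (lincomb B X (-C) Y) = 0"
  proof -
    have "herm q (lincomb B X (-C) Y) = herm q (sm Dl (cross de ga))" using rep3[of al be ga de] by (simp add: B_def C_def X_def Y_def Dl_def)
    also have "\<dots> = 0" using hF by (simp add: herm_sm)
    finally show ?thesis .
  qed
  show False by (rule onan_core[OF isoX isoY isoZ det A0 B0 C0 D E F])
qed

end

theorem mainTheorem4: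
  fixes q :: nat
  assumes "prime_power q"
    and "card (UNIV :: 'a::{field,finite} set) = q ^ 2"
  shows "card (secants q :: 'a vec3 set set) = q^2 * (q^2 - q + 1)
    \<and> q^2 * (q^2 - q + 1) = q^4 - q^3 + q^2
    \<and> (\<forall>L \<in> (secants q :: 'a vec3 set set). card {M. Hadj q L M} = (q + 1) * (q^2 - 1))
    \<and> (q + 1) * (q^2 - 1) = q^3 + q^2 - q - 1
    \<and> card (cliqueFamily q :: 'a vec3 set set set) = q^3 + 1
    \<and> (\<forall>K \<in> (cliqueFamily q :: 'a vec3 set set set). is_maximal_clique q K \<and> card K = q^2)
    \<and> (\<forall>K1 \<in> (cliqueFamily q :: 'a vec3 set set set). \<forall>K2 \<in> cliqueFamily q.
          K1 \<noteq> K2 \<longrightarrow> card (K1 \<inter> K2) = 1)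
    \<and> (\<forall>L \<in> (secants q :: 'a vec3 set set). card {K \<in> cliqueFamily q. L \<in> K} = q + 1)
    \<and> (\<forall>a b c d :: 'a vec3 set. distinct [a, b, c, d] \<and>
          Hadj q a b \<and> Hadj q a c \<and> Hadj q a d \<and> Hadj q b c \<and> Hadj q b d \<and> Hadj q c d
          \<longrightarrow> (\<exists>K \<in> cliqueFamily q. card ({a, b, c, d} \<inter> K) \<ge> 3))"
proof -
  interpret U q "TYPE('a)" by unfold_locales (use assms in auto)
  have ar1: "q^2 * (q^2 - q + 1) = q^4 - q^3 + q^2"
  proof -
    obtain r where "q = r + 2" using q_ge2 by (metis add.commute le_Suc_ex)
    thus ?thesis by (simp add: power2_eq_square power3_eq_cube power4_eq_xxxx algebra_simps)
  qed
  have ar2: "(q + 1) * (q^2 - 1) = q^3 + q^2 - q - 1"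
  proof -
    obtain r where "q = r + 2" using q_ge2 by (metis add.commute le_Suc_ex)
    thus ?thesis by (simp add: power2_eq_square power3_eq_cube algebra_simps)
  qed
  have max: "\<forall>K \<in> (cliqueFamily q :: 'a vec3 set set set). is_maximal_clique q K \<and> card K = q^2"
    using clique_at_maximal card_clique_at by (auto simp: cliqueFamily_def)
  show ?thesis
    using card_secants ar1 degree ar2 card_cliqueFamily max cliqueFamily_inter cliques_through_line K4
    by blast
qed

end
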